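(* Let $G$ be a finite connected simple graph. Then the connected subgraph arrangement $\mathcal{A}_G$ (with its defining forms considered over $\mathbb{R}$) is simplicial if and only if $G$ is a triangle (the cycle $C_3$) or a path graph.
   Context: For a finite simple graph $G=(N,E)$ with $N=\{1,\dots,n\}$ and $I\subseteq N$, $G[I]$ denotes the induced subgraph on $I$, and $H_I=\ker\big(\sum_{i\in I}x_i\big)$, where $x_1,\dots,x_n$ are the coordinate functions. The connected subgraph arrangement of $G$ is $\mathcal{A}_G=\{H_I:\emptyset\neq I\subseteq N,\ G[I]\text{ connected}\}$. An arrangement of hyperplanes in $\mathbb{R}^n$ is simplicial if every connected component of the complement of the union of its hyperplanes is an open simplicial cone. *)

theory Defs
  imports "HOL-Analysis.Analysis"
begin

text \<open>A finite simple graph on the vertex type 'n (finite), given by an edge relation.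
  Vertices index the coordinates of real^'n.\<close>

definition simple_graph :: "('n::finite \<Rightarrow> 'n \<Rightarrow> bool) \<Rightarrow> bool" where
  "simple_graph E \<longleftrightarrow> (\<forall>u v. E u v \<longrightarrow> E v u) \<and> (\<forall>u. \<not> E u u)"

definition induced_connected :: "('n::finite \<Rightarrow> 'n \<Rightarrow> bool) \<Rightarrow> 'n set \<Rightarrow> bool" where
  "induced_connected E I \<longleftrightarrow> I \<noteq> {} \<and>
     (\<forall>u\<in>I. \<forall>v\<in>I. (\<lambda>a b. a \<in> I \<and> b \<in> I \<and> E a b)\<^sup>*\<^sup>* u v)"

definition graph_connected :: "('n::finite \<Rightarrow> 'n \<Rightarrow> bool) \<Rightarrow> bool" where
  "graph_connected E \<longleftrightarrow> induced_connected E UNIV"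

definition hyp :: "'n::finite set \<Rightarrow> (real^'n) set" where
  "hyp I = {x. (\<Sum>i\<in>I. x $ i) = 0}"

definition connected_subgraph_arrangement :: "('n::finite \<Rightarrow> 'n \<Rightarrow> bool) \<Rightarrow> (real^'n) set set" where
  "connected_subgraph_arrangement E = {hyp I | I. I \<noteq> {} \<and> induced_connected E I}"

definition open_simplicial_cone :: "(real^'n::finite) set \<Rightarrow> bool" where
  "open_simplicial_cone C \<longleftrightarrow> (\<exists>B. independent B \<and> card B = CARD('n) \<and>
      C = {(\<Sum>b\<in>B. c b *\<^sub>R b) | c. \<forall>b\<in>B. c b > 0})"

definition simplicial_arrangement :: "(real^'n::finite) set set \<Rightarrow> bool" where
  "simplicial_arrangement A \<longleftrightarrow>
     (\<forall>C\<in>components (UNIV - \<Union>A). open_simplicial_cone C)"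

definition is_triangle :: "('n::finite \<Rightarrow> 'n \<Rightarrow> bool) \<Rightarrow> bool" where
  "is_triangle E \<longleftrightarrow> CARD('n) = 3 \<and> (\<forall>u v. E u v \<longleftrightarrow> u \<noteq> v)"

definition is_path_graph :: "('n::finite \<Rightarrow> 'n \<Rightarrow> bool) \<Rightarrow> bool" where
  "is_path_graph E \<longleftrightarrow> (\<exists>p::'n \<Rightarrow> nat. bij_betw p UNIV {0..<CARD('n)} \<and>
      (\<forall>u v. E u v \<longleftrightarrow> (p u = p v + 1 \<or> p v = p u + 1)))"

end

theory Submission
  imports Defs
begin

definition fJ :: "'n::finite set \<Rightarrow> real^'n \<Rightarrow> real" where
  "fJ J x = (\<Sum>i\<in>J. x $ i)"

definition cham :: "'n::finite set set \<Rightarrow> real^'n \<Rightarrow> (real^'n) set" where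
  "cham F x0 = {x. \<forall>J\<in>F. fJ J x * fJ J x0 > 0}"

lemma fJ_add: "fJ J (x + y) = fJ J x + fJ J y"
  by (simp add: fJ_def sum.distrib)
lemma fJ_scale: "fJ J (c *\<^sub>R x) = c * fJ J x"
  by (simp add: fJ_def sum_distrib_left)
lemma fJ_diff: "fJ J (x - y) = fJ J x - fJ J y"
  by (simp add: fJ_def sum_subtractf)
lemma linear_fJ: "linear (fJ J)"
  by (rule linearI) (simp_all add: fJ_add fJ_scale)
lemma continuous_fJ: "continuous_on UNIV (fJ J)"
  unfolding fJ_def by (intro continuous_intros)

lemma compl_arr: "UNIV - \<Union>{hyp J | J. J \<in> F} = {x. \<forall>J\<in>F. fJ J x \<noteq> 0}"
  by (auto simp: hyp_def fJ_def)

lemma convex_cham: "convex (cham F x0)"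
proof (unfold convex_def, intro ballI allI impI)
  fix x y and u v :: real
  assume x: "x \<in> cham F x0" and y: "y \<in> cham F x0" and uv: "0 \<le> u" "0 \<le> v" "u + v = 1"
  show "u *\<^sub>R x + v *\<^sub>R y \<in> cham F x0"
    unfolding cham_def
  proof (intro CollectI ballI)
    fix J assume J: "J \<in> F"
    have a: "fJ J x * fJ J x0 > 0" "fJ J y * fJ J x0 > 0" using x y J by (auto simp: cham_def)
    have "fJ J (u *\<^sub>R x + v *\<^sub>R y) * fJ J x0 = u * (fJ J x * fJ J x0) + v * (fJ J y * fJ J x0)"
      by (simp add: fJ_add fJ_scale algebra_simps)
    also have "\<dots> > 0"
    proof (cases "u = 0")
      case True then show ?thesis using uv a by simp
    next
      case False then have "u > 0" using uv by simp
      then show ?thesis using uv a by (simp add: add_pos_nonneg)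
    qed
    finally show "fJ J (u *\<^sub>R x + v *\<^sub>R y) * fJ J x0 > 0" .
  qed
qed

lemma comp_eq:
  assumes x0: "\<forall>J\<in>F. fJ J x0 \<noteq> 0"
  shows "connected_component_set {x. \<forall>J\<in>F. fJ J x \<noteq> 0} x0 = cham F x0"
proof
  let ?S = "{x. \<forall>J\<in>F. fJ J x \<noteq> 0}"
  show "cham F x0 \<subseteq> connected_component_set ?S x0"
  proof (rule connected_component_maximal)
    show "x0 \<in> cham F x0" using x0 by (auto simp: cham_def not_square_less_zero zero_less_mult_iff)
    show "connected (cham F x0)" by (rule convex_connected[OF convex_cham])
    show "cham F x0 \<subseteq> ?S" by (auto simp: cham_def)
  qed
  show "connected_component_set ?S x0 \<subseteq> cham F x0"
  proof
    fix y assume y: "y \<in> connected_component_set ?S x0"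
    let ?K = "connected_component_set ?S x0"
    have x0K: "x0 \<in> ?K" using x0 by simp
    have KS: "?K \<subseteq> ?S" by (rule connected_component_subset)
    show "y \<in> cham F x0" unfolding cham_def
    proof (intro CollectI ballI)
      fix J assume J: "J \<in> F"
      have conn: "connected (fJ J ` ?K)"
        by (rule connected_continuous_image[OF continuous_on_subset[OF continuous_fJ] connected_connected_component]) simp
      have nz: "\<And>z. z \<in> ?K \<Longrightarrow> fJ J z \<noteq> 0" using KS J by blast
      show "fJ J y * fJ J x0 > 0"
      proof (rule ccontr)
        assume "\<not> fJ J y * fJ J x0 > 0"
        then have le: "fJ J y * fJ J x0 \<le> 0" by simp
        have a: "fJ J y \<noteq> 0" "fJ J x0 \<noteq> 0" using nz y x0K by auto
        have "0 \<in> fJ J ` ?K"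
        proof (cases "fJ J y < 0")
          case True
          then have "fJ J x0 > 0" using le a by (smt (verit) mult_neg_neg)
          then show ?thesis using connected_contains_Icc[OF conn, of "fJ J y" "fJ J x0"] y x0K True by auto
        next
          case False
          then have "fJ J y > 0" using a by simp
          then have "fJ J x0 < 0" using le a by (smt (verit) mult_pos_pos)
          then show ?thesis using connected_contains_Icc[OF conn, of "fJ J x0" "fJ J y"] y x0K \<open>fJ J y > 0\<close> by auto
        qed
        then show False using nz by auto
      qed
    qed
  qed
qed

lemma components_arr:
  assumes "C \<in> components (UNIV - \<Union>{hyp J | J. J \<in> F})"
  shows "\<exists>x0. (\<forall>J\<in>F. fJ J x0 \<noteq> 0) \<and> C = cham F x0"
  using assms unfolding compl_arr components_def using comp_eq by blast

lemma cham_components: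
  assumes "\<forall>J\<in>F. fJ J x0 \<noteq> 0"
  shows "cham F x0 \<in> components (UNIV - \<Union>{hyp J | J. J \<in> F})"
  using assms unfolding compl_arr components_def using comp_eq[OF assms, symmetric] by blast

lemma fJ_axis: "fJ J (axis i 1) = (if i \<in> J then 1 else 0)"
  by (simp add: fJ_def axis_def sum.If_cases)

lemma oscone_rep:
  fixes C :: "(real^'n::finite) set"
  assumes "open_simplicial_cone C"
  shows "\<exists>B. independent B \<and> span B = UNIV \<and> finite B \<and>
           C = {x. \<forall>b\<in>B. representation B x b > 0}"
proof -
  obtain B where B: "independent B" "card B = CARD('n)"
    and C: "C = {(\<Sum>b\<in>B. c b *\<^sub>R b) | c. \<forall>b\<in>B. c b > 0}"
    using assms unfolding open_simplicial_cone_def by blast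
  have fin: "finite B" using B(1) by (rule finiteI_independent)
  have "card B = dim (UNIV :: (real^'n) set)" using B(2) by (simp add: dim_UNIV)
  then have sp: "span B = UNIV"
    using card_eq_dim[of B UNIV] B(1) fin by auto
  have "C = {x. \<forall>b\<in>B. representation B x b > 0}"
  proof (rule set_eqI, rule iffI)
    fix x assume "x \<in> C"
    then obtain c where c: "\<forall>b\<in>B. c b > 0" and x: "x = (\<Sum>b\<in>B. c b *\<^sub>R b)"
      using C by blast
    let ?f = "\<lambda>b. if b \<in> B then c b else 0"
    have fs: "{b. ?f b \<noteq> 0} = B" using c by auto
    have "representation B x = ?f"
    proof (rule representation_eqI[OF B(1)])
      show "x \<in> span B" using sp by simp
      show "\<And>b. ?f b \<noteq> 0 \<Longrightarrow> b \<in> B" by (simp split: if_splits)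
      show "finite {b. ?f b \<noteq> 0}" using fs fin by simp
      show "(\<Sum>b | ?f b \<noteq> 0. ?f b *\<^sub>R b) = x" unfolding fs x by simp
    qed
    then show "x \<in> {x. \<forall>b\<in>B. representation B x b > 0}" using c by simp
  next
    fix x assume x: "x \<in> {x. \<forall>b\<in>B. representation B x b > 0}"
    have "(\<Sum>b\<in>B. representation B x b *\<^sub>R b) = x"
      by (rule sum_representation_eq[OF B(1)]) (auto simp: sp fin)
    then show "x \<in> C" unfolding C using x by (intro CollectI exI[of _ "representation B x"]) auto
  qed
  then show ?thesis using B fin sp by blast
qed

lemma halfspace_prop:
  fixes g h :: "real^'n::finite \<Rightarrow> real"
  assumes g: "linear g" and h: "linear h" and w: "g w > 0"
    and imp: "\<And>v. g v > 0 \<Longrightarrow> h v > 0"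
  shows "\<exists>c>0. \<forall>x. h x = c * g x"
proof -
  have hw: "h w > 0" using imp w .
  have ker: "h y = 0" if "g y = 0" for y
  proof (rule ccontr)
    assume ne: "h y \<noteq> 0"
    define t where "t = - (h w + 1) / h y"
    have "g (w + t *\<^sub>R y) = g w" using that linear_add[OF g] linear_scale[OF g] by simp
    then have "h (w + t *\<^sub>R y) > 0" using imp w by simp
    moreover have "h (w + t *\<^sub>R y) = h w + t * h y" using linear_add[OF h] linear_scale[OF h] by simp
    moreover have "t * h y = - (h w + 1)" using ne by (simp add: t_def)
    ultimately show False by simp
  qed
  show ?thesis
  proof (intro exI conjI allI)
    show "h w / g w > 0" using hw w by simp
    fix x
    define y where "y = x - (g x / g w) *\<^sub>R w"
    have "g y = 0" using w by (simp add: y_def linear_diff[OF g] linear_scale[OF g])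
    then have "h y = 0" by (rule ker)
    then have "h x = (g x / g w) * h w" by (simp add: y_def linear_diff[OF h] linear_scale[OF h])
    then show "h x = h w / g w * g x" by simp
  qed
qed

lemma wall_prop:
  fixes g :: "real^'n::finite \<Rightarrow> real" and B :: "(real^'n) set"
  assumes g: "linear g" and gp: "g p = 0" and r: "r > 0"
    and ball: "\<And>q. q \<in> ball p r \<Longrightarrow> (\<forall>b\<in>B. representation B q b > 0) \<longleftrightarrow> g q > 0"
    and w: "g w > 0" and B: "independent B" "span B = UNIV"
  shows "\<exists>b\<in>B. \<exists>c>0. \<forall>x. representation B x b = c * g x"
proof -
  have "\<not> (\<forall>b\<in>B. representation B p b > 0)" using ball[of p] r gp by simp
  then obtain b0 where b0: "b0 \<in> B" "representation B p b0 \<le> 0" by (auto simp: not_less)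
  have lin: "linear (\<lambda>x. representation B x b0)"
    by (rule linearI) (simp_all add: representation_add[OF B(1)] representation_scale[OF B(1)] B(2))
  have "\<exists>c>0. \<forall>x. representation B x b0 = c * g x"
  proof (rule halfspace_prop[OF g lin w])
    fix v assume gv: "g v > 0"
    define t where "t = r / (2 * (norm v + 1))"
    have npos: "2 * (norm v + 1) > 0" by (simp add: add_nonneg_pos)
    then have t: "t > 0" using r unfolding t_def by (rule divide_pos_pos[rotated])
    have "norm (t *\<^sub>R v) < r"
    proof -
      have "norm (t *\<^sub>R v) = t * norm v" using t by simp
      also have "\<dots> \<le> t * (norm v + 1)" using t by simp
      also have "\<dots> = r / 2" unfolding t_def using npos by (simp add: field_simps)
      also have "\<dots> < r" using r by simp
      finally show ?thesis .
    qed
    then have q: "p + t *\<^sub>R v \<in> ball p r" by (simp add: dist_norm)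
    have "g (p + t *\<^sub>R v) = t * g v" using gp linear_add[OF g] linear_scale[OF g] by simp
    then have "g (p + t *\<^sub>R v) > 0" using t gv by simp
    then have "representation B (p + t *\<^sub>R v) b0 > 0" using ball[OF q] b0 by blast
    moreover have "representation B (p + t *\<^sub>R v) b0 = representation B p b0 + t * representation B v b0"
      using linear_add[OF lin] linear_scale[OF lin] by simp
    ultimately have "t * representation B v b0 > 0" using b0 by simp
    then show "representation B v b0 > 0" using t by (simp add: zero_less_mult_iff)
  qed
  then show ?thesis using b0 by blast
qed

definition wallpt :: "'n::finite set set \<Rightarrow> real^'n \<Rightarrow> 'n set \<Rightarrow> real^'n \<Rightarrow> bool" where
  "wallpt F x0 K p \<longleftrightarrow> fJ K p = 0 \<and> (\<forall>J\<in>F. J \<noteq> K \<longrightarrow> fJ J p * fJ J x0 > 0)"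

lemma wallpt_ball:
  fixes F :: "'n::finite set set"
  assumes wp: "wallpt F x0 K p" and K: "K \<in> F"
  shows "\<exists>r>0. \<forall>q\<in>ball p r. q \<in> cham F x0 \<longleftrightarrow> fJ K q * fJ K x0 > 0"
proof -
  have "\<forall>J\<in>F - {K}. \<forall>\<^sub>F q in nhds p. fJ J q * fJ J x0 > 0"
  proof
    fix J assume J: "J \<in> F - {K}"
    have "((\<lambda>q. fJ J q * fJ J x0) \<longlongrightarrow> fJ J p * fJ J x0) (nhds p)"
      unfolding fJ_def by (intro tendsto_intros filterlim_ident)
    then show "\<forall>\<^sub>F q in nhds p. fJ J q * fJ J x0 > 0"
      using wp J unfolding wallpt_def by (auto intro: order_tendstoD)
  qed
  then have "\<forall>\<^sub>F q in nhds p. \<forall>J\<in>F - {K}. fJ J q * fJ J x0 > 0"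
    by (intro eventually_ball_finite) auto
  then obtain d where d: "d > 0" "\<And>q. dist q p < d \<Longrightarrow> \<forall>J\<in>F - {K}. fJ J q * fJ J x0 > 0"
    unfolding eventually_nhds_metric by blast
  show ?thesis
  proof (intro exI[of _ d] conjI ballI)
    fix q assume "q \<in> ball p d"
    then have "\<forall>J\<in>F - {K}. fJ J q * fJ J x0 > 0" using d by (simp add: dist_commute)
    then show "q \<in> cham F x0 \<longleftrightarrow> fJ K q * fJ K x0 > 0" using K unfolding cham_def by auto
  qed (fact d)
qed

lemma wall_functional:
  fixes F :: "'n::finite set set"
  assumes wp: "wallpt F x0 K p" and K: "K \<in> F" "K \<noteq> {}" and x0K: "fJ K x0 \<noteq> 0"
    and B: "independent B" "span B = UNIV" and C: "cham F x0 = {x. \<forall>b\<in>B. representation B x b > 0}"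
  shows "\<exists>b\<in>B. \<exists>c>0. \<forall>x. representation B x b = c * (fJ K x * fJ K x0)"
proof -
  obtain r where r: "r > 0" "\<forall>q\<in>ball p r. q \<in> cham F x0 \<longleftrightarrow> fJ K q * fJ K x0 > 0"
    using wallpt_ball[OF wp K(1)] by blast
  obtain i where i: "i \<in> K" using K(2) by blast
  show ?thesis
  proof (rule wall_prop[OF _ _ r(1) _ _ B])
    show "linear (\<lambda>x. fJ K x * fJ K x0)"
      by (rule linearI) (simp_all add: fJ_add fJ_scale algebra_simps)
    show "fJ K (fJ K x0 *\<^sub>R axis i 1) * fJ K x0 > 0"
      using x0K i by (simp add: fJ_scale fJ_axis zero_less_mult_iff linorder_neq_iff) blast
  qed (use r C wp x0K i in \<open>auto simp: wallpt_def fJ_axis\<close>)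
qed

lemma fJ_prop_eq:
  assumes h: "\<forall>x. a * fJ J x = a' * fJ J' x" and a: "a \<noteq> 0" "a' \<noteq> 0"
  shows "J = J'"
proof (rule set_eqI)
  fix i
  have "a * fJ J (axis i 1) = a' * fJ J' (axis i 1)" using h by blast
  then show "i \<in> J \<longleftrightarrow> i \<in> J'" using a by (auto simp: fJ_axis split: if_splits)
qed

lemma fJ_univ: "fJ J x = (\<Sum>i\<in>UNIV. (if i \<in> J then 1 else 0) * x $ i)"
proof -
  have "(\<Sum>i\<in>UNIV. (if i \<in> J then 1 else 0) * x $ i) = (\<Sum>i\<in>UNIV. if i \<in> J then x $ i else 0)"
    by (rule sum.cong) auto
  also have "\<dots> = (\<Sum>i\<in>J. x $ i)" by (simp add: sum.If_cases)
  finally show ?thesis unfolding fJ_def by simp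
qed

lemma nonsimplicial_cert:
  fixes F :: "'n::finite set set" and x0 :: "real^'n"
  assumes ne: "\<forall>J\<in>F. J \<noteq> {}" and x0: "\<forall>J\<in>F. fJ J x0 \<noteq> 0"
    and J: "J1 \<in> F" "J2 \<in> F" "J3 \<in> F" "J4 \<in> F"
    and d: "J1 \<noteq> J2" "J1 \<noteq> J3" "J1 \<noteq> J4"
    and rel: "\<And>i. (if i \<in> J1 then 1 else 0) - (if i \<in> J2 then 1 else 0)
                  - (if i \<in> J3 then 1 else 0) + (if i \<in> J4 then 1 else (0::real)) = 0"
    and w1: "wallpt F x0 J1 p1" and w2: "wallpt F x0 J2 p2"
    and w3: "wallpt F x0 J3 p3" and w4: "wallpt F x0 J4 p4"
  shows "\<not> open_simplicial_cone (cham F x0)"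
proof
  assume "open_simplicial_cone (cham F x0)"
  then obtain B where B: "independent B" "span B = UNIV" "finite B"
    and C: "cham F x0 = {x. \<forall>b\<in>B. representation B x b > 0}"
    using oscone_rep by blast
  have relx: "fJ J1 x - fJ J2 x - fJ J3 x + fJ J4 x = 0" for x
  proof -
    have "fJ J1 x - fJ J2 x - fJ J3 x + fJ J4 x =
      (\<Sum>i\<in>UNIV. ((if i \<in> J1 then 1 else 0) - (if i \<in> J2 then 1 else 0)
                  - (if i \<in> J3 then 1 else 0) + (if i \<in> J4 then 1 else (0::real))) * x $ i)"
      unfolding fJ_univ by (simp add: sum.distrib sum_subtractf algebra_simps)
    also have "\<dots> = 0" using rel by simp
    finally show ?thesis .
  qed
  have get: "\<exists>b\<in>B. \<exists>c>0. \<forall>x. representation B x b = c * (fJ K x * fJ K x0)"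
    if "wallpt F x0 K p" "K \<in> F" for K p
    using wall_functional[OF that(1,2) _ _ B(1,2) C] that ne x0 by blast
  obtain b1 c1 where b1: "b1 \<in> B" "c1 > 0" "\<forall>x. representation B x b1 = c1 * (fJ J1 x * fJ J1 x0)"
    using get[OF w1 J(1)] by blast
  obtain b2 c2 where b2: "b2 \<in> B" "c2 > 0" "\<forall>x. representation B x b2 = c2 * (fJ J2 x * fJ J2 x0)"
    using get[OF w2 J(2)] by blast
  obtain b3 c3 where b3: "b3 \<in> B" "c3 > 0" "\<forall>x. representation B x b3 = c3 * (fJ J3 x * fJ J3 x0)"
    using get[OF w3 J(3)] by blast
  obtain b4 c4 where b4: "b4 \<in> B" "c4 > 0" "\<forall>x. representation B x b4 = c4 * (fJ J4 x * fJ J4 x0)"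
    using get[OF w4 J(4)] by blast
  have s: "fJ J1 x0 \<noteq> 0" "fJ J2 x0 \<noteq> 0" "fJ J3 x0 \<noteq> 0" "fJ J4 x0 \<noteq> 0" using x0 J by auto
  have diff: "bk \<noteq> b1" if "\<forall>x. representation B x bk = ck * (fJ Jk x * fJ Jk x0)" "ck > 0"
      "fJ Jk x0 \<noteq> 0" "Jk \<noteq> J1" for bk ck Jk
  proof
    assume "bk = b1"
    then have "\<forall>x. (ck * fJ Jk x0) * fJ Jk x = (c1 * fJ J1 x0) * fJ J1 x"
      using that(1) b1(3) by (auto simp: algebra_simps)
    then have "Jk = J1" by (rule fJ_prop_eq) (use that b1 s in auto)
    then show False using that by simp
  qed
  have r1: "representation B b1 b = (if b = b1 then 1 else 0)" for b
    using representation_basis[OF B(1) b1(1)] by simp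
  have z: "fJ Jk b1 = 0" if "\<forall>x. representation B x bk = ck * (fJ Jk x * fJ Jk x0)" "ck > 0"
      "fJ Jk x0 \<noteq> 0" "Jk \<noteq> J1" for bk ck Jk
  proof -
    have "bk \<noteq> b1" by (rule diff[OF that])
    then have "ck * (fJ Jk b1 * fJ Jk x0) = 0" using that(1) r1[of bk] by simp
    then show ?thesis using that by simp
  qed
  have "fJ J2 b1 = 0" "fJ J3 b1 = 0" "fJ J4 b1 = 0"
    using z[OF b2(3) b2(2) s(2)] z[OF b3(3) b3(2) s(3)] z[OF b4(3) b4(2) s(4)] d by auto
  then have "fJ J1 b1 = 0" using relx[of b1] by simp
  then have "representation B b1 b1 = 0" using b1(3) by simp
  then show False using r1[of b1] by simp
qed

definition FG :: "('n::finite \<Rightarrow> 'n \<Rightarrow> bool) \<Rightarrow> 'n set set" where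
  "FG E = {I. I \<noteq> {} \<and> induced_connected E I}"

lemma csa_eq: "connected_subgraph_arrangement E = {hyp J | J. J \<in> FG E}"
  unfolding connected_subgraph_arrangement_def FG_def by auto

lemma FG_ne: "\<forall>J\<in>FG E. J \<noteq> {}" by (auto simp: FG_def)

lemma not_simplicial_from_cert:
  assumes x0: "\<forall>J\<in>FG E. fJ J x0 \<noteq> 0"
    and ns: "\<not> open_simplicial_cone (cham (FG E) x0)"
  shows "\<not> simplicial_arrangement (connected_subgraph_arrangement E)"
  using cham_components[OF x0] ns unfolding simplicial_arrangement_def csa_eq by blast

lemma star_connected:
  assumes sym: "\<And>x y. E x y \<Longrightarrow> E y x" and v: "v \<in> J" and st: "\<And>u. u \<in> J \<Longrightarrow> u = v \<or> E v u"
  shows "induced_connected E J"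
  unfolding induced_connected_def
proof (intro conjI ballI)
  show "J \<noteq> {}" using v by auto
  let ?R = "\<lambda>a b. a \<in> J \<and> b \<in> J \<and> E a b"
  have to: "?R\<^sup>*\<^sup>* v u" if "u \<in> J" for u
    using st[OF that] that v by auto
  have from': "?R\<^sup>*\<^sup>* u v" if "u \<in> J" for u
    using st[OF that] that v sym by (auto intro: r_into_rtranclp)
  fix x y assume "x \<in> J" "y \<in> J"
  then show "?R\<^sup>*\<^sup>* x y" using to from' by (meson rtranclp_trans)
qed

lemma fJ_split:
  assumes "\<And>i. i \<notin> I \<Longrightarrow> x $ i = M"
  shows "fJ J x = fJ (J \<inter> I) x + M * card (J - I)"
proof -
  have "fJ J x = (\<Sum>i\<in>J \<inter> I. x $ i) + (\<Sum>i\<in>J - I. x $ i)"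
    unfolding fJ_def by (metis Diff_Int_distrib2 Int_Diff Int_absorb2 finite sum.Int_Diff top_greatest)
  also have "(\<Sum>i\<in>J - I. x $ i) = M * card (J - I)" using assms by simp
  finally show ?thesis by (simp add: fJ_def)
qed

lemma certA:
  fixes E :: "'n::finite \<Rightarrow> 'n \<Rightarrow> bool"
  assumes sg: "simple_graph E"
    and dist: "v \<noteq> a" "v \<noteq> b" "v \<noteq> c" "a \<noteq> b" "a \<noteq> c" "b \<noteq> c"
    and e: "E v a" "E v b" "E v c"
  shows "\<not> simplicial_arrangement (connected_subgraph_arrangement E)"
proof -
  have sym: "\<And>x y. E x y \<Longrightarrow> E y x" using sg by (auto simp: simple_graph_def)
  define I where "I = {v, a, b, c}"
  define pt :: "real \<Rightarrow> real \<Rightarrow> real \<Rightarrow> real \<Rightarrow> real^'n" where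
    "pt zv za zb zc = (\<chi> i. if i = v then zv else if i = a then za else if i = b then zb
                          else if i = c then zc else 100)" for zv za zb zc
  have val: "fJ J (pt zv za zb zc) = (if v \<in> J then zv else 0) + (if a \<in> J then za else 0)
     + (if b \<in> J then zb else 0) + (if c \<in> J then zc else 0) + 100 * real (card (J - I))" for J zv za zb zc
  proof -
    have "fJ J (pt zv za zb zc) = fJ (J \<inter> I) (pt zv za zb zc) + 100 * real (card (J - I))"
      by (rule fJ_split) (auto simp: pt_def I_def)
    moreover have "fJ (J \<inter> I) (pt zv za zb zc) = (\<Sum>i\<in>I. if i \<in> J then pt zv za zb zc $ i else 0)"
      unfolding fJ_def by (simp add: sum.If_cases Int_commute)
    moreover have "(\<Sum>i\<in>I. if i \<in> J then pt zv za zb zc $ i else 0) =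
       (if v \<in> J then zv else 0) + (if a \<in> J then za else 0)
     + (if b \<in> J then zb else 0) + (if c \<in> J then zc else 0)"
      unfolding I_def using dist by (simp add: pt_def)
    ultimately show ?thesis by simp
  qed
  have big: "fJ J (pt zv za zb zc) > 0" if "\<not> J \<subseteq> I" "\<bar>zv\<bar> + \<bar>za\<bar> + \<bar>zb\<bar> + \<bar>zc\<bar> < 100" for J zv za zb zc
  proof -
    have "J - I \<noteq> {}" using that by auto
    then have "card (J - I) \<ge> 1" by (simp add: Suc_le_eq card_gt_0_iff)
    then have "100 * real (card (J - I)) \<ge> 100" by simp
    then show ?thesis unfolding val using that(2) by (smt (verit))
  qed
  define x0 where "x0 = pt (-4) (-4) 6 6"
  define J1 where "J1 = {v, a, b}"
  define J2 where "J2 = {v, b}"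
  define J3 where "J3 = {v, a, c}"
  define J4 where "J4 = {v, c}"
  have inF: "K \<in> FG E" if "v \<in> K" "K \<subseteq> I" for K
    unfolding FG_def using that star_connected[of E v K, OF sym] e by (auto simp: I_def)
  have J1F: "J1 \<in> FG E" and J2F: "J2 \<in> FG E" and J3F: "J3 \<in> FG E" and J4F: "J4 \<in> FG E"
    by (auto intro!: inF simp: J1_def J2_def J3_def J4_def I_def)
  have sub: "J \<subseteq> I \<Longrightarrow> (\<And>i. i \<in> I \<Longrightarrow> i \<in> J \<longleftrightarrow> i \<in> K) \<Longrightarrow> K \<subseteq> I \<Longrightarrow> J = K" for J K
    by blast
  have emp: "J \<subseteq> I \<Longrightarrow> v \<notin> J \<Longrightarrow> a \<notin> J \<Longrightarrow> b \<notin> J \<Longrightarrow> c \<notin> J \<Longrightarrow> J = {}" for J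
    by (auto simp: I_def)
  have x0nz: "fJ J x0 \<noteq> 0" if "J \<in> FG E" for J
  proof (cases "J \<subseteq> I")
    case True
    have ne: "J \<noteq> {}" using that by (auto simp: FG_def)
    have c0: "card (J - I) = 0" using True by simp
    show ?thesis using emp[OF True] ne unfolding x0_def val c0
      by (cases "v \<in> J"; cases "a \<in> J"; cases "b \<in> J"; cases "c \<in> J") simp_all
  next
    case False then show ?thesis using big[OF False, of "-4" "-4" 6 6] by (simp add: x0_def)
  qed
  have wall: "wallpt (FG E) x0 K (pt zv za zb zc)"
    if K: "K \<subseteq> I" and z: "fJ K (pt zv za zb zc) = 0" and bd: "\<bar>zv\<bar> + \<bar>za\<bar> + \<bar>zb\<bar> + \<bar>zc\<bar> < 100"
      and cond: "\<And>bv ba bb bc. (bv \<or> ba \<or> bb \<or> bc) \<Longrightarrow>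
           \<not> (bv = (v \<in> K) \<and> ba = (a \<in> K) \<and> bb = (b \<in> K) \<and> bc = (c \<in> K)) \<Longrightarrow>
           ((if bv then zv else 0) + (if ba then za else 0) + (if bb then zb else 0) + (if bc then zc else 0))
         * ((if bv then -4 else 0) + (if ba then -4 else 0) + (if bb then 6 else 0) + (if bc then 6 else 0)) > (0::real)"
    for K zv za zb zc
    unfolding wallpt_def
  proof (intro conjI ballI impI z)
    fix J assume J: "J \<in> FG E" "J \<noteq> K"
    show "fJ J (pt zv za zb zc) * fJ J x0 > 0"
    proof (cases "J \<subseteq> I")
      case True
      have ne: "J \<noteq> {}" using J by (auto simp: FG_def)
      have c0: "card (J - I) = 0" using True by simp
      have "\<not> (\<forall>i\<in>I. i \<in> J \<longleftrightarrow> i \<in> K)" using sub[OF True _ K] J(2) by blast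
      then have nk: "\<not> ((v \<in> J) = (v \<in> K) \<and> (a \<in> J) = (a \<in> K) \<and> (b \<in> J) = (b \<in> K) \<and> (c \<in> J) = (c \<in> K))"
        by (auto simp: I_def)
      have "v \<in> J \<or> a \<in> J \<or> b \<in> J \<or> c \<in> J" using emp[OF True] ne by blast
      from cond[OF this nk] show ?thesis unfolding x0_def val c0 by simp
    next
      case False
      have "fJ J (pt zv za zb zc) > 0" by (rule big[OF False bd])
      moreover have "fJ J x0 > 0" using big[OF False, of "-4" "-4" 6 6] by (simp add: x0_def)
      ultimately show ?thesis by simp
    qed
  qed
  have w1: "wallpt (FG E) x0 J1 (pt (-2) (-2) 4 3)"
    by (rule wall) (use dist in \<open>auto simp: J1_def I_def val\<close>)
  have w2: "wallpt (FG E) x0 J2 (pt (-4) (-2) 4 5)"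
    by (rule wall) (use dist in \<open>auto simp: J2_def I_def val\<close>)
  have w3: "wallpt (FG E) x0 J3 (pt (-3) (-3) 5 6)"
    by (rule wall) (use dist in \<open>auto simp: J3_def I_def val\<close>)
  have w4: "wallpt (FG E) x0 J4 (pt (-4) (-2) 5 4)"
    by (rule wall) (use dist in \<open>auto simp: J4_def I_def val\<close>)
  have ns: "\<not> open_simplicial_cone (cham (FG E) x0)"
  proof (rule nonsimplicial_cert[OF FG_ne _ J1F J2F J3F J4F _ _ _ _ w1 w2 w3 w4])
    show "\<forall>J\<in>FG E. fJ J x0 \<noteq> 0" using x0nz by blast
    show "J1 \<noteq> J2" "J1 \<noteq> J3" "J1 \<noteq> J4" using dist by (auto simp: J1_def J2_def J3_def J4_def)
    show "\<And>i. (if i \<in> J1 then 1 else 0) - (if i \<in> J2 then 1 else 0)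
                  - (if i \<in> J3 then 1 else 0) + (if i \<in> J4 then 1 else (0::real)) = 0"
      using dist by (auto simp: J1_def J2_def J3_def J4_def)
  qed
  show ?thesis by (rule not_simplicial_from_cert[OF _ ns]) (use x0nz in blast)
qed

lemma certB:
  fixes E :: "'n::finite \<Rightarrow> 'n \<Rightarrow> bool"
  assumes uw: "u \<noteq> w" and r0: "r0 \<noteq> u" "r0 \<noteq> w"
    and cu: "induced_connected E (UNIV - {u})" and cw: "induced_connected E (UNIV - {w})"
    and nc: "\<not> induced_connected E (UNIV - {u, w})"
  shows "\<not> simplicial_arrangement (connected_subgraph_arrangement E)"
proof -
  define I where "I = {u, w, r0}"
  define m where "m = card (UNIV - I)"
  define pt :: "real \<Rightarrow> real \<Rightarrow> real \<Rightarrow> real^'n" where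
    "pt al be ga = (\<chi> i. if i = u then al else if i = w then be else if i = r0 then ga - al - be - 10 * real m
                          else 10)" for al be ga
  have val: "fJ J (pt al be ga) = (if u \<in> J then al else 0) + (if w \<in> J then be else 0)
     + (if r0 \<in> J then ga - al - be - 10 * real m else 0) + 10 * real (card (J - I))" for J al be ga
  proof -
    have "fJ J (pt al be ga) = fJ (J \<inter> I) (pt al be ga) + 10 * real (card (J - I))"
      by (rule fJ_split) (auto simp: pt_def I_def)
    moreover have "fJ (J \<inter> I) (pt al be ga) = (\<Sum>i\<in>I. if i \<in> J then pt al be ga $ i else 0)"
      unfolding fJ_def by (simp add: sum.If_cases Int_commute)
    moreover have "(\<Sum>i\<in>I. if i \<in> J then pt al be ga $ i else 0) =
       (if u \<in> J then al else 0) + (if w \<in> J then be else 0)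
     + (if r0 \<in> J then ga - al - be - 10 * real m else 0)"
      unfolding I_def using uw r0 by (simp add: pt_def)
    ultimately show ?thesis by simp
  qed
  have pos: "fJ J (pt al be ga) > 0" if "r0 \<notin> J" "J - I \<noteq> {}" "\<bar>al\<bar> + \<bar>be\<bar> < 10" for J al be ga
  proof -
    have "card (J - I) \<ge> 1" using that by (simp add: Suc_le_eq card_gt_0_iff)
    then have "10 * real (card (J - I)) \<ge> 10" by simp
    then show ?thesis unfolding val using that by (smt (verit))
  qed
  have neg: "fJ J (pt al be ga) < 0" if "r0 \<in> J" "\<not> (UNIV - I \<subseteq> J)" "\<bar>al\<bar> + \<bar>be\<bar> + \<bar>ga - al - be\<bar> < 10"
    for J al be ga
  proof -
    have "J - I \<subset> UNIV - I" using that by auto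
    then have "card (J - I) < m" unfolding m_def by (simp add: psubset_card_mono)
    then have "card (J - I) + 1 \<le> m" by simp
    then have "10 * real (card (J - I)) \<le> 10 * real m - 10" by linarith
    then show ?thesis unfolding val using that by (smt (verit))
  qed
  have full: "fJ J (pt al be ga) = (if u \<in> J then al else 0) + (if w \<in> J then be else 0) + ga - al - be"
    if "r0 \<in> J" "UNIV - I \<subseteq> J" for J al be ga
  proof -
    have "J - I = UNIV - I" using that by auto
    then show ?thesis unfolding val m_def using that by simp
  qed
  have low: "fJ J (pt al be ga) = (if u \<in> J then al else 0) + (if w \<in> J then be else 0)"
    if "r0 \<notin> J" "J - I = {}" for J al be ga
    unfolding val using that by simp
  define x0 where "x0 = pt 2 2 3"
  have cls: "(r0 \<notin> J \<and> J - I \<noteq> {}) \<or> (r0 \<in> J \<and> \<not> (UNIV - I \<subseteq> J)) \<or>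
     (r0 \<notin> J \<and> J - I = {} \<and> ((u \<in> J \<and> w \<notin> J) \<or> (u \<notin> J \<and> w \<in> J) \<or> (u \<in> J \<and> w \<in> J))) \<or>
     (r0 \<in> J \<and> UNIV - I \<subseteq> J \<and> ((u \<in> J \<and> w \<notin> J) \<or> (u \<notin> J \<and> w \<in> J) \<or> (u \<in> J \<and> w \<in> J)))"
    if J: "J \<in> FG E" for J
  proof -
    have ne: "J \<noteq> {}" using J by (auto simp: FG_def)
    have notR: "J \<noteq> UNIV - {u, w}" using J nc by (auto simp: FG_def)
    have "J = UNIV - {u, w}" if "r0 \<in> J" "UNIV - I \<subseteq> J" "u \<notin> J" "w \<notin> J"
      using that by (auto simp: I_def)
    moreover have "J = {}" if "r0 \<notin> J" "J - I = {}" "u \<notin> J" "w \<notin> J"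
      using that by (auto simp: I_def)
    ultimately show ?thesis using ne notR by blast
  qed
  have J1F: "{u} \<in> FG E" unfolding FG_def induced_connected_def by auto
  have J2F: "{w} \<in> FG E" unfolding FG_def induced_connected_def by auto
  have J3F: "UNIV - {w} \<in> FG E" using cw unfolding FG_def induced_connected_def by auto
  have J4F: "UNIV - {u} \<in> FG E" using cu unfolding FG_def induced_connected_def by auto
  have eqs: "J = {u}" if "r0 \<notin> J" "J - I = {}" "u \<in> J" "w \<notin> J" for J
    using that by (auto simp: I_def)
  have eqs2: "J = {w}" if "r0 \<notin> J" "J - I = {}" "u \<notin> J" "w \<in> J" for J
    using that uw by (auto simp: I_def)
  have eqs3: "J = UNIV - {w}" if "r0 \<in> J" "UNIV - I \<subseteq> J" "u \<in> J" "w \<notin> J" for J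
    using that by (auto simp: I_def)
  have eqs4: "J = UNIV - {u}" if "r0 \<in> J" "UNIV - I \<subseteq> J" "u \<notin> J" "w \<in> J" for J
    using that by (auto simp: I_def)
  have gen: "fJ J (pt al be ga) * fJ J x0 > 0"
    if J: "J \<in> FG E" "J \<noteq> K" and bd: "\<bar>al\<bar> + \<bar>be\<bar> + \<bar>ga - al - be\<bar> < 10"
      and s1: "K \<noteq> {u} \<Longrightarrow> al > 0" and s2: "K \<noteq> {w} \<Longrightarrow> be > 0" and s3: "al + be > 0"
      and s4: "K \<noteq> UNIV - {w} \<Longrightarrow> ga - be > 0" and s5: "K \<noteq> UNIV - {u} \<Longrightarrow> ga - al > 0"
      and s6: "ga > 0"
    for J K al be ga
  proof -
    have bd0: "\<bar>2::real\<bar> + \<bar>2::real\<bar> + \<bar>3 - 2 - 2::real\<bar> < 10" by simp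
    from cls[OF J(1)] show ?thesis
    proof (elim disjE conjE)
      assume a: "r0 \<notin> J" "J - I \<noteq> {}"
      show ?thesis using pos[OF a, of al be ga] pos[OF a, of 2 2 3] bd unfolding x0_def by simp
    next
      assume a: "r0 \<in> J" "\<not> (UNIV - I \<subseteq> J)"
      show ?thesis using neg[OF a bd] neg[OF a bd0] unfolding x0_def by (simp add: mult_neg_neg)
    next
      assume a: "r0 \<notin> J" "J - I = {}" "u \<in> J" "w \<notin> J"
      show ?thesis using low[OF a(1,2), of al be ga] low[OF a(1,2), of 2 2 3] a s1 eqs[OF a] J(2)
        unfolding x0_def by simp
    next
      assume a: "r0 \<notin> J" "J - I = {}" "u \<notin> J" "w \<in> J"
      show ?thesis using low[OF a(1,2), of al be ga] low[OF a(1,2), of 2 2 3] a s2 eqs2[OF a] J(2)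
        unfolding x0_def by simp
    next
      assume a: "r0 \<notin> J" "J - I = {}" "u \<in> J" "w \<in> J"
      show ?thesis using low[OF a(1,2), of al be ga] low[OF a(1,2), of 2 2 3] a s3
        unfolding x0_def by simp
    next
      assume a: "r0 \<in> J" "UNIV - I \<subseteq> J" "u \<in> J" "w \<notin> J"
      show ?thesis using full[OF a(1,2), of al be ga] full[OF a(1,2), of 2 2 3] a s4 eqs3[OF a] J(2)
        unfolding x0_def by simp
    next
      assume a: "r0 \<in> J" "UNIV - I \<subseteq> J" "u \<notin> J" "w \<in> J"
      show ?thesis using full[OF a(1,2), of al be ga] full[OF a(1,2), of 2 2 3] a s5 eqs4[OF a] J(2)
        unfolding x0_def by simp
    next
      assume a: "r0 \<in> J" "UNIV - I \<subseteq> J" "u \<in> J" "w \<in> J"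
      show ?thesis using full[OF a(1,2), of al be ga] full[OF a(1,2), of 2 2 3] a s6
        unfolding x0_def by simp
    qed
  qed
  have x0nz: "fJ J x0 \<noteq> 0" if "J \<in> FG E" for J
  proof -
    have "fJ J (pt 2 2 3) * fJ J x0 > 0"
      by (rule gen[OF that, of "{}"]) (use that in \<open>auto simp: FG_def\<close>)
    then show ?thesis by auto
  qed
  have vu: "fJ {u} (pt al be ga) = al" for al be ga
    using low[of "{u}" al be ga] r0 uw by (auto simp: I_def)
  have vw: "fJ {w} (pt al be ga) = be" for al be ga
    using low[of "{w}" al be ga] r0 uw by (auto simp: I_def)
  have vUw: "fJ (UNIV - {w}) (pt al be ga) = ga - be" for al be ga
    using full[of "UNIV - {w}" al be ga] r0 uw by (auto simp: I_def)
  have vUu: "fJ (UNIV - {u}) (pt al be ga) = ga - al" for al be ga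
    using full[of "UNIV - {u}" al be ga] r0 uw by (auto simp: I_def)
  have d: "{u} \<noteq> {w}" "{u} \<noteq> UNIV - {w}" "{u} \<noteq> UNIV - {u}" "{w} \<noteq> UNIV - {w}"
    "{w} \<noteq> UNIV - {u}" "UNIV - {w} \<noteq> UNIV - {u}" using uw r0 by auto
  have w1: "wallpt (FG E) x0 {u} (pt 0 2 3)"
    unfolding wallpt_def
  proof (intro conjI ballI impI)
    show "fJ ({u}) (pt 0 2 3) = 0" by (simp add: vu)
    fix J assume "J \<in> FG E" "J \<noteq> {u}"
    then show "fJ J (pt 0 2 3) * fJ J x0 > 0" by (rule gen) (use d in auto)
  qed
  have w2: "wallpt (FG E) x0 {w} (pt 2 0 3)"
    unfolding wallpt_def
  proof (intro conjI ballI impI)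
    show "fJ ({w}) (pt 2 0 3) = 0" by (simp add: vw)
    fix J assume "J \<in> FG E" "J \<noteq> {w}"
    then show "fJ J (pt 2 0 3) * fJ J x0 > 0" by (rule gen) (use d in auto)
  qed
  have w3: "wallpt (FG E) x0 (UNIV - {w}) (pt 1 2 2)"
    unfolding wallpt_def
  proof (intro conjI ballI impI)
    show "fJ (UNIV - {w}) (pt 1 2 2) = 0" by (simp add: vUw)
    fix J assume "J \<in> FG E" "J \<noteq> (UNIV - {w})"
    then show "fJ J (pt 1 2 2) * fJ J x0 > 0" by (rule gen) (use d in auto)
  qed
  have w4: "wallpt (FG E) x0 (UNIV - {u}) (pt 2 1 2)"
    unfolding wallpt_def
  proof (intro conjI ballI impI)
    show "fJ (UNIV - {u}) (pt 2 1 2) = 0" by (simp add: vUu)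
    fix J assume "J \<in> FG E" "J \<noteq> (UNIV - {u})"
    then show "fJ J (pt 2 1 2) * fJ J x0 > 0" by (rule gen) (use d in auto)
  qed
  have ns: "\<not> open_simplicial_cone (cham (FG E) x0)"
  proof (rule nonsimplicial_cert[OF FG_ne _ J1F J2F J3F J4F _ _ _ _ w1 w2 w3 w4])
    show "\<forall>J\<in>FG E. fJ J x0 \<noteq> 0" using x0nz by blast
    show "{u} \<noteq> {w}" "{u} \<noteq> UNIV - {w}" "{u} \<noteq> UNIV - {u}" using d by auto
    show "\<And>i. (if i \<in> {u} then 1 else 0) - (if i \<in> {w} then 1 else 0)
                  - (if i \<in> UNIV - {w} then 1 else 0) + (if i \<in> UNIV - {u} then 1 else (0::real)) = 0"
      using uw by auto
  qed
  show ?thesis by (rule not_simplicial_from_cert[OF _ ns]) (use x0nz in blast)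
qed

lemma sym_rtranclp:
  assumes "\<And>a b. R a b \<Longrightarrow> R b a" and "R\<^sup>*\<^sup>* a b"
  shows "R\<^sup>*\<^sup>* b a"
  using assms(2)
proof (induction rule: rtranclp_induct)
  case base then show ?case by simp
next
  case (step y z)
  then show ?case using assms(1) by (meson converse_rtranclp_into_rtranclp)
qed

lemma chain_connected:
  assumes sym: "\<And>x y. E x y \<Longrightarrow> E y x" and ch: "successively E ys" and ne: "ys \<noteq> []"
  shows "induced_connected E (set ys)"
  unfolding induced_connected_def
proof (intro conjI ballI)
  show "set ys \<noteq> {}" using ne by simp
  let ?R = "\<lambda>a b. a \<in> set ys \<and> b \<in> set ys \<and> E a b"
  have symR: "?R\<^sup>*\<^sup>* a b \<Longrightarrow> ?R\<^sup>*\<^sup>* b a" for a b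
    by (rule sym_rtranclp) (use sym in auto)
  have reach: "i < length ys \<Longrightarrow> ?R\<^sup>*\<^sup>* (ys ! 0) (ys ! i)" for i
  proof (induction i)
    case 0 then show ?case by simp
  next
    case (Suc i)
    have "E (ys ! i) (ys ! Suc i)" using successively_nth[OF ch Suc.prems] .
    then have "?R (ys ! i) (ys ! Suc i)" using Suc.prems by auto
    moreover have "?R\<^sup>*\<^sup>* (ys ! 0) (ys ! i)" using Suc by simp
    ultimately show ?case by (rule rtranclp.rtrancl_into_rtrancl[rotated])
  qed
  fix a b assume a: "a \<in> set ys" and b: "b \<in> set ys"
  obtain i where i: "i < length ys" "a = ys ! i" using a by (auto simp: in_set_conv_nth)
  obtain j where j: "j < length ys" "b = ys ! j" using b by (auto simp: in_set_conv_nth)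
  show "?R\<^sup>*\<^sup>* a b" using symR[OF reach[OF i(1)]] reach[OF j(1)] i j by (meson rtranclp_trans)
qed

lemma graph_classify:
  fixes E :: "'n::finite \<Rightarrow> 'n \<Rightarrow> bool"
  assumes sg: "simple_graph E" and gc: "graph_connected E"
    and deg: "\<And>v x y z. E v x \<Longrightarrow> E v y \<Longrightarrow> E v z \<Longrightarrow> x = y \<or> x = z \<or> y = z"
  shows "is_triangle E \<or> is_path_graph E \<or>
    (\<exists>u w r0. u \<noteq> w \<and> r0 \<noteq> u \<and> r0 \<noteq> w \<and> induced_connected E (UNIV - {u}) \<and>
       induced_connected E (UNIV - {w}) \<and> \<not> induced_connected E (UNIV - {u, w}))"
proof -
  have sym: "\<And>x y. E x y \<Longrightarrow> E y x" and irr: "\<And>x. \<not> E x x"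
    using sg by (auto simp: simple_graph_def)
  define P where "P = {xs :: 'n list. distinct xs \<and> successively E xs \<and> xs \<noteq> []}"
  have finP: "finite P"
    by (rule finite_subset[OF _ finite_subset_distinct[of "UNIV :: 'n set"]]) (auto simp: P_def)
  obtain v0 :: 'n where True by blast
  have "[v0] \<in> P" by (simp add: P_def)
  then have neP: "P \<noteq> {}" by blast
  obtain xs where xsP: "xs \<in> P" and mx: "\<And>ys. ys \<in> P \<Longrightarrow> length ys \<le> length xs"
  proof -
    have "Max (length ` P) \<in> length ` P" using finP neP by (intro Max_in) auto
    then obtain xs where "xs \<in> P" "length xs = Max (length ` P)" by auto
    moreover have "\<And>ys. ys \<in> P \<Longrightarrow> length ys \<le> Max (length ` P)" using finP by simp
    ultimately show ?thesis using that by metis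
  qed
  have dxs: "distinct xs" and cxs: "successively E xs" and nxs: "xs \<noteq> []"
    using xsP by (auto simp: P_def)
  define n where "n = length xs"
  define k where "k = n - 1"
  have n0: "n > 0" using nxs by (simp add: n_def)
  have kn: "k < n" "Suc k = n" using n0 by (auto simp: k_def)
  have edge_nth: "E (xs ! i) (xs ! Suc i)" if "Suc i < n" for i
    using successively_nth[OF cxs] that by (simp add: n_def)
  have inj: "xs ! i = xs ! j \<longleftrightarrow> i = j" if "i < n" "j < n" for i j
    using nth_eq_iff_index_eq[OF dxs] that by (simp add: n_def)
  have hd_ext: "y \<in> set xs" if "E (xs ! 0) y" for y
  proof (rule ccontr)
    assume y: "y \<notin> set xs"
    have "y # xs \<in> P" using y dxs cxs nxs sym[OF that] by (auto simp: P_def successively_Cons hd_conv_nth)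
    then show False using mx[of "y # xs"] by simp
  qed
  have last_ext: "y \<in> set xs" if "E (xs ! k) y" for y
  proof (rule ccontr)
    assume y: "y \<notin> set xs"
    have "last xs = xs ! k" using nxs by (simp add: last_conv_nth k_def n_def)
    then have "xs @ [y] \<in> P" using y dxs cxs nxs that by (auto simp: P_def successively_append_iff)
    then show False using mx[of "xs @ [y]"] by simp
  qed
  have internal: "y = xs ! (i - 1) \<or> y = xs ! Suc i" if "0 < i" "i < k" "E (xs ! i) y" for i y
  proof -
    have a: "E (xs ! i) (xs ! (i - 1))" using sym[OF edge_nth[of "i - 1"]] that kn by simp
    have b: "E (xs ! i) (xs ! Suc i)" using edge_nth[of i] that kn by simp
    have "xs ! (i - 1) \<noteq> xs ! Suc i" using inj[of "i - 1" "Suc i"] that kn by simp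
    then show ?thesis using deg[OF a b that(3)] by auto
  qed
  have closed: "y \<in> set xs" if aa: "a \<in> set xs" and ea: "E a y" for a y
  proof -
    obtain i where i: "i < n" "a = xs ! i" using aa unfolding in_set_conv_nth n_def by metis
    show ?thesis
    proof (cases "i = 0")
      case True then show ?thesis using hd_ext ea i by simp
    next
      case False
      show ?thesis
      proof (cases "i = k")
        case True then show ?thesis using last_ext ea i by simp
      next
        case False
        then have "i < k" using i kn by simp
        then have "y = xs ! (i - 1) \<or> y = xs ! Suc i" using internal[of i y] \<open>i \<noteq> 0\<close> ea i by simp
        then show ?thesis using \<open>i < k\<close> kn \<open>i \<noteq> 0\<close> by (auto simp: n_def)
      qed
    qed
  qed
  have univ: "set xs = UNIV"
  proof -
    have "v \<in> set xs" for v
    proof -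
      have "(\<lambda>a b. a \<in> UNIV \<and> b \<in> UNIV \<and> E a b)\<^sup>*\<^sup>* (xs ! 0) v"
        using gc by (auto simp: graph_connected_def induced_connected_def)
      then show ?thesis
      proof (induction rule: rtranclp_induct)
        case base then show ?case using n0 by (simp add: n_def)
      next
        case (step y z) then show ?case using closed by blast
      qed
    qed
    then show ?thesis by auto
  qed
  have cardn: "CARD('n) = n" using distinct_card[OF dxs] univ by (simp add: n_def)
  have char: "j = Suc i \<or> i = Suc j \<or> (i = 0 \<and> j = k) \<or> (i = k \<and> j = 0)"
    if "i < n" "j < n" "E (xs ! i) (xs ! j)" for i j
  proof -
    have ij: "i \<noteq> j" using that irr by auto
    have c1: "j = Suc i \<or> i = Suc j" if "0 < i" "i < k" "i < n" "j < n" "E (xs ! i) (xs ! j)" for i j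
    proof -
      have "xs ! j = xs ! (i - 1) \<or> xs ! j = xs ! Suc i" using internal[OF that(1,2,5)] by simp
      then show ?thesis using inj[of j "i - 1"] inj[of j "Suc i"] that kn by auto
    qed
    show ?thesis
    proof (cases "0 < i \<and> i < k")
      case True then show ?thesis using c1[of i j] that by auto
    next
      case False
      show ?thesis
      proof (cases "0 < j \<and> j < k")
        case True then show ?thesis using c1[of j i] that(1,2) sym[OF that(3)] by auto
      next
        case False
        then show ?thesis using \<open>\<not> (0 < i \<and> i < k)\<close> that ij kn by auto
      qed
    qed
  qed
  show ?thesis
  proof (cases "2 \<le> k \<and> E (xs ! 0) (xs ! k)")
    case False
    have pc: "E (xs ! i) (xs ! j) \<longleftrightarrow> (i = Suc j \<or> j = Suc i)" if "i < n" "j < n" for i j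
    proof
      assume e: "E (xs ! i) (xs ! j)"
      have ij: "i \<noteq> j" using e irr by auto
      show "i = Suc j \<or> j = Suc i" using char[OF that e] False sym[OF e] e ij by (cases "k < 2") (auto simp: k_def)
    next
      assume "i = Suc j \<or> j = Suc i"
      then show "E (xs ! i) (xs ! j)"
      proof
        assume ij: "i = Suc j"
        then have "E (xs ! j) (xs ! i)" using edge_nth[of j] that by simp
        then show ?thesis by (rule sym)
      next
        assume "j = Suc i"
        then show ?thesis using edge_nth[of i] that by simp
      qed
    qed
    define p where "p = the_inv_into {..<n} ((!) xs)"
    have bij: "bij_betw ((!) xs) {..<n} UNIV" using bij_betw_nth[OF dxs _ univ[symmetric]] by (simp add: n_def)
    then have bp: "bij_betw p UNIV {0..<CARD('n)}" unfolding p_def cardn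
      using bij_betw_the_inv_into by (fastforce simp: atLeast0LessThan)
    have pinv: "xs ! (p v) = v" "p v < n" for v
      using bij bp unfolding p_def cardn
      by (auto simp: bij_betw_def f_the_inv_into_f atLeast0LessThan)
    have "is_path_graph E" unfolding is_path_graph_def
    proof (intro exI[of _ p] conjI allI bp)
      fix u v
      have "E u v \<longleftrightarrow> E (xs ! p u) (xs ! p v)" using pinv by simp
      also have "\<dots> \<longleftrightarrow> (p u = Suc (p v) \<or> p v = Suc (p u))" using pc pinv by blast
      finally show "E u v \<longleftrightarrow> (p u = p v + 1 \<or> p v = p u + 1)" by simp
    qed
    then show ?thesis by blast
  next
    case True
    then have k2: "2 \<le> k" and e0k: "E (xs ! 0) (xs ! k)" by auto
    show ?thesis
    proof (cases "k = 2")
      case True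
      have "is_triangle E" unfolding is_triangle_def
      proof (intro conjI allI)
        show "CARD('n) = 3" using cardn True kn by simp
        fix u v
        obtain i where i: "i < n" "u = xs ! i" using univ by (metis UNIV_I in_set_conv_nth n_def)
        obtain j where j: "j < n" "v = xs ! j" using univ by (metis UNIV_I in_set_conv_nth n_def)
        have n3: "n = 3" using True kn by simp
        show "E u v \<longleftrightarrow> u \<noteq> v"
        proof
          assume "E u v" then show "u \<noteq> v" using irr by auto
        next
          assume "u \<noteq> v"
          then have "i \<noteq> j" using i j by auto
          then have "j = Suc i \<or> i = Suc j \<or> (i = 0 \<and> j = 2) \<or> (i = 2 \<and> j = 0)" using i j n3 by auto
          then show "E u v"
          proof (elim disjE conjE)
            assume "j = Suc i" then show ?thesis using edge_nth[of i] i j by simp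
          next
            assume "i = Suc j" then show ?thesis using sym[OF edge_nth[of j]] i j by simp
          next
            assume "i = 0" "j = 2" then show ?thesis using e0k i j True by simp
          next
            assume "i = 2" "j = 0" then show ?thesis using sym[OF e0k] i j True by simp
          qed
        qed
      qed
      then show ?thesis by blast
    next
      case False
      then have k3: "3 \<le> k" using k2 by simp
      define u where "u = xs ! 0"
      define w where "w = xs ! 2"
      define r0 where "r0 = xs ! 1"
      have d: "u \<noteq> w" "r0 \<noteq> u" "r0 \<noteq> w" using inj[of 0 2] inj[of 1 0] inj[of 1 2] k3 kn
        by (auto simp: u_def w_def r0_def)
      have c1: "induced_connected E (UNIV - {u})"
      proof -
        obtain a ys where xa: "xs = a # ys" using nxs by (cases xs) auto
        have au: "a = u" using xa by (simp add: u_def)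
        have ays: "a \<notin> set ys" using dxs xa by simp
        have "insert a (set ys) = UNIV" using univ xa by simp
        then have sy: "set ys = UNIV - {u}" using ays au by blast
        have "successively E ys" using cxs xa by (cases ys) simp_all
        moreover have "ys \<noteq> []" using k3 kn xa by (auto simp: n_def)
        ultimately have "induced_connected E (set ys)" using chain_connected[of E, OF sym] by blast
        then show ?thesis using sy by simp
      qed
      have c2: "induced_connected E (UNIV - {w})"
      proof -
        define ys where "ys = drop (Suc 2) xs @ take 2 xs"
        have split: "xs = take 2 xs @ xs ! 2 # drop (Suc 2) xs" using k3 kn
          by (intro id_take_nth_drop) (simp add: n_def)
        have "set ys = UNIV - {w}"
        proof -
          have s0: "set (take 2 xs @ xs ! 2 # drop (Suc 2) xs) = set xs" by (simp only: split[symmetric])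
          have A: "set xs = set (take 2 xs) \<union> {w} \<union> set (drop (Suc 2) xs)" using s0 unfolding w_def by auto
          have d0: "distinct (take 2 xs @ xs ! 2 # drop (Suc 2) xs)" by (simp only: split[symmetric] dxs)
          have B: "w \<notin> set (take 2 xs) \<union> set (drop (Suc 2) xs)" using d0 unfolding w_def by auto
          have "set ys = set (take 2 xs) \<union> set (drop (Suc 2) xs)" by (auto simp: ys_def)
          then show ?thesis using A B univ by blast
        qed
        moreover have "successively E ys"
        proof -
          have s1: "successively E (drop (Suc 2) xs)"
            unfolding successively_conv_nth
          proof (intro allI impI)
            fix i assume "Suc i < length (drop (Suc 2) xs)"
            then have "Suc (i + 3) < n" by (simp add: n_def)
            then have "E (xs ! (i + 3)) (xs ! Suc (i + 3))" by (rule edge_nth)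
            then show "E (drop (Suc 2) xs ! i) (drop (Suc 2) xs ! Suc i)" using \<open>Suc (i + 3) < n\<close>
              by (simp add: n_def add.commute)
          qed
          have s2: "successively E (take 2 xs)" using cxs
            by (auto simp: successively_conv_nth)
          have l: "last (drop (Suc 2) xs) = xs ! k" using k3 kn by (simp add: last_drop last_conv_nth nxs k_def n_def)
          have h: "hd (take 2 xs) = xs ! 0" using nxs by (simp add: hd_conv_nth)
          show ?thesis unfolding ys_def successively_append_iff using s1 s2 l h sym[OF e0k] by simp
        qed
        moreover have "ys \<noteq> []" using nxs by (simp add: ys_def)
        ultimately have "induced_connected E (set ys)" using chain_connected[of E, OF sym] by blast
        then show ?thesis using \<open>set ys = UNIV - {w}\<close> by simp
      qed
      have c3: "\<not> induced_connected E (UNIV - {u, w})"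
      proof
        assume ic: "induced_connected E (UNIV - {u, w})"
        let ?S = "UNIV - {u, w}"
        have r0S: "r0 \<in> ?S" using d by auto
        have x3: "xs ! 3 \<in> ?S" using inj[of 3 0] inj[of 3 2] k3 kn by (auto simp: u_def w_def)
        have "(\<lambda>a b. a \<in> ?S \<and> b \<in> ?S \<and> E a b)\<^sup>*\<^sup>* r0 (xs ! 3)"
          using ic r0S x3 unfolding induced_connected_def by blast
        then have "xs ! 3 = r0"
        proof (induction rule: rtranclp_induct)
          case base then show ?case by simp
        next
          case (step y z)
          then have "E r0 z" "z \<in> ?S" by auto
          then have "z = xs ! 0 \<or> z = xs ! Suc 1" using internal[of 1 z] k3 unfolding r0_def by simp
          then show ?case using \<open>z \<in> ?S\<close> by (auto simp: u_def w_def numeral_2_eq_2)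
        qed
        then show False using inj[of 3 1] k3 kn by (simp add: r0_def)
      qed
      show ?thesis using d c1 c2 c3 by blast
    qed
  qed
qed

lemma sum_axis_comp: "(\<Sum>i\<in>UNIV. f i *\<^sub>R (axis i 1 :: real^'n::finite)) $ j = f j"
proof -
  have "(\<Sum>i\<in>UNIV. f i *\<^sub>R (axis i 1 :: real^'n)) $ j = (\<Sum>i\<in>UNIV. f i * (axis i 1 $ j))"
    by simp
  also have "\<dots> = (\<Sum>i\<in>UNIV. if i = j then f i else 0)"
    by (rule sum.cong) (auto simp: axis_def)
  also have "\<dots> = f j" by simp
  finally show ?thesis .
qed

lemma simplicial_from_G:
  fixes G :: "real^'n::finite \<Rightarrow> real^'n"
  assumes lin: "linear G" and inj: "inj G" and C: "C = {x. \<forall>i. G x $ i > 0}"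
  shows "open_simplicial_cone C"
proof -
  obtain H where H: "linear H" "H \<circ> G = id" using linear_injective_left_inverse[OF lin inj] by blast
  have HG: "H (G x) = x" for x using H(2) by (metis comp_apply id_apply)
  have sG: "surj G" using linear_injective_imp_surjective[OF lin inj] by simp
  have GH: "G (H y) = y" for y
  proof -
    obtain z where "y = G z" using sG by blast
    then show ?thesis using HG by simp
  qed
  define h where "h i = H (axis i (1::real))" for i
  have Gh: "G (h i) = axis i 1" for i by (simp add: h_def GH)
  have injh: "inj h"
  proof (rule injI)
    fix i j assume "h i = h j"
    then have "axis i (1::real) = axis j 1" using Gh by metis
    then show "i = j" by (simp add: axis_eq_axis)
  qed
  define B where "B = range h"
  have cardB: "card B = CARD('n)" unfolding B_def using injh by (simp add: card_image)
  have exp: "x = (\<Sum>i\<in>UNIV. (G x $ i) *\<^sub>R h i)" for x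
  proof -
    have "(\<Sum>i\<in>UNIV. (G x $ i) *\<^sub>R h i) = H (\<Sum>i\<in>UNIV. (G x $ i) *\<^sub>R axis i 1)"
      by (simp add: linear_sum[OF H(1)] linear_scale[OF H(1)] h_def)
    also have "(\<Sum>i\<in>UNIV. (G x $ i) *\<^sub>R axis i (1::real)) = G x"
      unfolding vec_eq_iff using sum_axis_comp[of "\<lambda>i. G x $ i"] by simp
    finally show ?thesis by (simp add: HG)
  qed
  have sumB: "(\<Sum>b\<in>B. c b *\<^sub>R b) = (\<Sum>i\<in>UNIV. c (h i) *\<^sub>R h i)" for c
    unfolding B_def by (simp add: sum.reindex[OF injh])
  have spB: "span B = UNIV"
  proof -
    have "x \<in> span B" for x
    proof -
      have "(\<Sum>i\<in>UNIV. (G x $ i) *\<^sub>R h i) \<in> span B"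
        by (intro span_sum span_scale span_base) (auto simp: B_def)
      then show ?thesis using exp[of x] by simp
    qed
    then show ?thesis by auto
  qed
  have indB: "independent B"
  proof -
    have "finite B" by (simp add: B_def)
    moreover have "card B = dim (UNIV :: (real^'n) set)" using cardB by (simp add: dim_UNIV)
    ultimately show ?thesis using card_eq_dim[of B UNIV] spB by auto
  qed
  have "C = {(\<Sum>b\<in>B. c b *\<^sub>R b) | c. \<forall>b\<in>B. c b > 0}"
  proof (rule set_eqI, rule iffI)
    fix x assume x: "x \<in> C"
    define c where "c b = G x $ inv h b" for b
    have ch: "c (h i) = G x $ i" for i by (simp add: c_def inv_f_f[OF injh])
    have "x = (\<Sum>b\<in>B. c b *\<^sub>R b)" unfolding sumB ch by (rule exp)
    moreover have "\<forall>b\<in>B. c b > 0" using x C by (auto simp: B_def ch)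
    ultimately show "x \<in> {(\<Sum>b\<in>B. c b *\<^sub>R b) | c. \<forall>b\<in>B. c b > 0}" by blast
  next
    fix x assume "x \<in> {(\<Sum>b\<in>B. c b *\<^sub>R b) | c. \<forall>b\<in>B. c b > 0}"
    then obtain c where c: "\<forall>b\<in>B. c b > 0" and x: "x = (\<Sum>i\<in>UNIV. c (h i) *\<^sub>R h i)"
      using sumB by auto
    have "G x = (\<Sum>i\<in>UNIV. c (h i) *\<^sub>R axis i 1)"
      unfolding x by (simp add: linear_sum[OF lin] linear_scale[OF lin] Gh)
    then have "G x $ j = c (h j)" for j using sum_axis_comp[of "\<lambda>i. c (h i)" j] by simp
    then show "x \<in> C" using c C by (auto simp: B_def)
  qed
  then show ?thesis unfolding open_simplicial_cone_def using indB cardB by blast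
qed

lemma pos_prod: "0 < (s::real) \<Longrightarrow> (t * s > 0) = (t > 0)"
  by (simp add: zero_less_mult_iff)
lemma neg_prod: "(s::real) < 0 \<Longrightarrow> (t * s > 0) = (t < 0)"
  by (auto simp: zero_less_mult_iff)

lemma tri_L0:
  fixes a0 b0 c0 :: real
  assumes "a0 < 0" "b0 < 0" "c0 < 0" "a0 + b0 < 0" "b0 + c0 < 0" "a0 + c0 < 0" "a0 + b0 + c0 < 0"
  shows "\<exists>p1 q1 r1 p2 q2 r2 p3 q3 r3 :: real. (\<forall>a b c. (a * (a0) > 0 \<and> b * (b0) > 0 \<and> c * (c0) > 0 \<and> (a + b) * (a0 + b0) > 0 \<and> (b + c) * (b0 + c0) > 0 \<and> (a + c) * (a0 + c0) > 0 \<and> (a + b + c) * (a0 + b0 + c0) > 0) \<longleftrightarrow> (p1 * a + q1 * b + r1 * c > 0 \<and> p2 * a + q2 * b + r2 * c > 0 \<and> p3 * a + q3 * b + r3 * c > 0)) \<and> (\<forall>a b c. p1 * a + q1 * b + r1 * c = 0 \<and> p2 * a + q2 * b + r2 * c = 0 \<and> p3 * a + q3 * b + r3 * c = 0 \<longrightarrow> a = 0 \<and> b = 0 \<and> c = 0)"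
  apply (rule exI[of _ "-1"], rule exI[of _ "0"], rule exI[of _ "0"], rule exI[of _ "0"], rule exI[of _ "-1"], rule exI[of _ "0"], rule exI[of _ "0"], rule exI[of _ "0"], rule exI[of _ "-1"])
  apply (simp only: neg_prod[OF assms(1)] neg_prod[OF assms(2)] neg_prod[OF assms(3)] neg_prod[OF assms(4)] neg_prod[OF assms(5)] neg_prod[OF assms(6)] neg_prod[OF assms(7)])
  apply (intro conjI allI impI iffI; (elim conjE)?; (intro conjI)?; linarith)
  done

lemma tri_L1:
  fixes a0 b0 c0 :: real
  assumes "a0 < 0" "b0 < 0" "0 < c0" "a0 + b0 < 0" "b0 + c0 < 0" "a0 + c0 < 0" "a0 + b0 + c0 < 0"
  shows "\<exists>p1 q1 r1 p2 q2 r2 p3 q3 r3 :: real. (\<forall>a b c. (a * (a0) > 0 \<and> b * (b0) > 0 \<and> c * (c0) > 0 \<and> (a + b) * (a0 + b0) > 0 \<and> (b + c) * (b0 + c0) > 0 \<and> (a + c) * (a0 + c0) > 0 \<and> (a + b + c) * (a0 + b0 + c0) > 0) \<longleftrightarrow> (p1 * a + q1 * b + r1 * c > 0 \<and> p2 * a + q2 * b + r2 * c > 0 \<and> p3 * a + q3 * b + r3 * c > 0)) \<and> (\<forall>a b c. p1 * a + q1 * b + r1 * c = 0 \<and> p2 * a + q2 * b + r2 * c = 0 \<and> p3 * a + q3 * b + r3 * c = 0 \<longrightarrow> a = 0 \<and> b = 0 \<and> c = 0)"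
  apply (rule exI[of _ "0"], rule exI[of _ "0"], rule exI[of _ "1"], rule exI[of _ "0"], rule exI[of _ "-1"], rule exI[of _ "-1"], rule exI[of _ "-1"], rule exI[of _ "0"], rule exI[of _ "-1"])
  apply (simp only: neg_prod[OF assms(1)] neg_prod[OF assms(2)] pos_prod[OF assms(3)] neg_prod[OF assms(4)] neg_prod[OF assms(5)] neg_prod[OF assms(6)] neg_prod[OF assms(7)])
  apply (intro conjI allI impI iffI; (elim conjE)?; (intro conjI)?; linarith)
  done

lemma tri_L2:
  fixes a0 b0 c0 :: real
  assumes "a0 < 0" "b0 < 0" "0 < c0" "a0 + b0 < 0" "b0 + c0 < 0" "0 < a0 + c0" "a0 + b0 + c0 < 0"
  shows "\<exists>p1 q1 r1 p2 q2 r2 p3 q3 r3 :: real. (\<forall>a b c. (a * (a0) > 0 \<and> b * (b0) > 0 \<and> c * (c0) > 0 \<and> (a + b) * (a0 + b0) > 0 \<and> (b + c) * (b0 + c0) > 0 \<and> (a + c) * (a0 + c0) > 0 \<and> (a + b + c) * (a0 + b0 + c0) > 0) \<longleftrightarrow> (p1 * a + q1 * b + r1 * c > 0 \<and> p2 * a + q2 * b + r2 * c > 0 \<and> p3 * a + q3 * b + r3 * c > 0)) \<and> (\<forall>a b c. p1 * a + q1 * b + r1 * c = 0 \<and> p2 * a + q2 * b + r2 * c = 0 \<and> p3 * a + q3 * b + r3 * c = 0 \<longrightarrow> a = 0 \<and> b = 0 \<and> c = 0)"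
  apply (rule exI[of _ "-1"], rule exI[of _ "0"], rule exI[of _ "0"], rule exI[of _ "0"], rule exI[of _ "-1"], rule exI[of _ "-1"], rule exI[of _ "1"], rule exI[of _ "0"], rule exI[of _ "1"])
  apply (simp only: neg_prod[OF assms(1)] neg_prod[OF assms(2)] pos_prod[OF assms(3)] neg_prod[OF assms(4)] neg_prod[OF assms(5)] pos_prod[OF assms(6)] neg_prod[OF assms(7)])
  apply (intro conjI allI impI iffI; (elim conjE)?; (intro conjI)?; linarith)
  done

lemma tri_L3:
  fixes a0 b0 c0 :: real
  assumes "a0 < 0" "b0 < 0" "0 < c0" "a0 + b0 < 0" "0 < b0 + c0" "a0 + c0 < 0" "a0 + b0 + c0 < 0"
  shows "\<exists>p1 q1 r1 p2 q2 r2 p3 q3 r3 :: real. (\<forall>a b c. (a * (a0) > 0 \<and> b * (b0) > 0 \<and> c * (c0) > 0 \<and> (a + b) * (a0 + b0) > 0 \<and> (b + c) * (b0 + c0) > 0 \<and> (a + c) * (a0 + c0) > 0 \<and> (a + b + c) * (a0 + b0 + c0) > 0) \<longleftrightarrow> (p1 * a + q1 * b + r1 * c > 0 \<and> p2 * a + q2 * b + r2 * c > 0 \<and> p3 * a + q3 * b + r3 * c > 0)) \<and> (\<forall>a b c. p1 * a + q1 * b + r1 * c = 0 \<and> p2 * a + q2 * b + r2 * c = 0 \<and> p3 * a + q3 * b + r3 * c = 0 \<longrightarrow> a = 0 \<and> b = 0 \<and> c = 0)"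
  apply (rule exI[of _ "0"], rule exI[of _ "-1"], rule exI[of _ "0"], rule exI[of _ "0"], rule exI[of _ "1"], rule exI[of _ "1"], rule exI[of _ "-1"], rule exI[of _ "0"], rule exI[of _ "-1"])
  apply (simp only: neg_prod[OF assms(1)] neg_prod[OF assms(2)] pos_prod[OF assms(3)] neg_prod[OF assms(4)] pos_prod[OF assms(5)] neg_prod[OF assms(6)] neg_prod[OF assms(7)])
  apply (intro conjI allI impI iffI; (elim conjE)?; (intro conjI)?; linarith)
  done

lemma tri_L4:
  fixes a0 b0 c0 :: real
  assumes "a0 < 0" "b0 < 0" "0 < c0" "a0 + b0 < 0" "0 < b0 + c0" "0 < a0 + c0" "a0 + b0 + c0 < 0"
  shows "\<exists>p1 q1 r1 p2 q2 r2 p3 q3 r3 :: real. (\<forall>a b c. (a * (a0) > 0 \<and> b * (b0) > 0 \<and> c * (c0) > 0 \<and> (a + b) * (a0 + b0) > 0 \<and> (b + c) * (b0 + c0) > 0 \<and> (a + c) * (a0 + c0) > 0 \<and> (a + b + c) * (a0 + b0 + c0) > 0) \<longleftrightarrow> (p1 * a + q1 * b + r1 * c > 0 \<and> p2 * a + q2 * b + r2 * c > 0 \<and> p3 * a + q3 * b + r3 * c > 0)) \<and> (\<forall>a b c. p1 * a + q1 * b + r1 * c = 0 \<and> p2 * a + q2 * b + r2 * c = 0 \<and> p3 * a + q3 * b + r3 * c = 0 \<longrightarrow> a = 0 \<and> b = 0 \<and> c = 0)"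
  apply (rule exI[of _ "0"], rule exI[of _ "1"], rule exI[of _ "1"], rule exI[of _ "1"], rule exI[of _ "0"], rule exI[of _ "1"], rule exI[of _ "-1"], rule exI[of _ "-1"], rule exI[of _ "-1"])
  apply (simp only: neg_prod[OF assms(1)] neg_prod[OF assms(2)] pos_prod[OF assms(3)] neg_prod[OF assms(4)] pos_prod[OF assms(5)] pos_prod[OF assms(6)] neg_prod[OF assms(7)])
  apply (intro conjI allI impI iffI; (elim conjE)?; (intro conjI)?; linarith)
  done

lemma tri_L5:
  fixes a0 b0 c0 :: real
  assumes "a0 < 0" "b0 < 0" "0 < c0" "a0 + b0 < 0" "0 < b0 + c0" "0 < a0 + c0" "0 < a0 + b0 + c0"
  shows "\<exists>p1 q1 r1 p2 q2 r2 p3 q3 r3 :: real. (\<forall>a b c. (a * (a0) > 0 \<and> b * (b0) > 0 \<and> c * (c0) > 0 \<and> (a + b) * (a0 + b0) > 0 \<and> (b + c) * (b0 + c0) > 0 \<and> (a + c) * (a0 + c0) > 0 \<and> (a + b + c) * (a0 + b0 + c0) > 0) \<longleftrightarrow> (p1 * a + q1 * b + r1 * c > 0 \<and> p2 * a + q2 * b + r2 * c > 0 \<and> p3 * a + q3 * b + r3 * c > 0)) \<and> (\<forall>a b c. p1 * a + q1 * b + r1 * c = 0 \<and> p2 * a + q2 * b + r2 * c = 0 \<and> p3 * a + q3 * b + r3 * c = 0 \<longrightarrow> a = 0 \<and> b = 0 \<and> c = 0)"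
  apply (rule exI[of _ "-1"], rule exI[of _ "0"], rule exI[of _ "0"], rule exI[of _ "0"], rule exI[of _ "-1"], rule exI[of _ "0"], rule exI[of _ "1"], rule exI[of _ "1"], rule exI[of _ "1"])
  apply (simp only: neg_prod[OF assms(1)] neg_prod[OF assms(2)] pos_prod[OF assms(3)] neg_prod[OF assms(4)] pos_prod[OF assms(5)] pos_prod[OF assms(6)] pos_prod[OF assms(7)])
  apply (intro conjI allI impI iffI; (elim conjE)?; (intro conjI)?; linarith)
  done

lemma tri_L6:
  fixes a0 b0 c0 :: real
  assumes "a0 < 0" "0 < b0" "c0 < 0" "a0 + b0 < 0" "b0 + c0 < 0" "a0 + c0 < 0" "a0 + b0 + c0 < 0"
  shows "\<exists>p1 q1 r1 p2 q2 r2 p3 q3 r3 :: real. (\<forall>a b c. (a * (a0) > 0 \<and> b * (b0) > 0 \<and> c * (c0) > 0 \<and> (a + b) * (a0 + b0) > 0 \<and> (b + c) * (b0 + c0) > 0 \<and> (a + c) * (a0 + c0) > 0 \<and> (a + b + c) * (a0 + b0 + c0) > 0) \<longleftrightarrow> (p1 * a + q1 * b + r1 * c > 0 \<and> p2 * a + q2 * b + r2 * c > 0 \<and> p3 * a + q3 * b + r3 * c > 0)) \<and> (\<forall>a b c. p1 * a + q1 * b + r1 * c = 0 \<and> p2 * a + q2 * b + r2 * c = 0 \<and> p3 * a + q3 * b + r3 * c = 0 \<longrightarrow> a = 0 \<and> b = 0 \<and> c = 0)"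
  apply (rule exI[of _ "0"], rule exI[of _ "1"], rule exI[of _ "0"], rule exI[of _ "-1"], rule exI[of _ "-1"], rule exI[of _ "0"], rule exI[of _ "0"], rule exI[of _ "-1"], rule exI[of _ "-1"])
  apply (simp only: neg_prod[OF assms(1)] pos_prod[OF assms(2)] neg_prod[OF assms(3)] neg_prod[OF assms(4)] neg_prod[OF assms(5)] neg_prod[OF assms(6)] neg_prod[OF assms(7)])
  apply (intro conjI allI impI iffI; (elim conjE)?; (intro conjI)?; linarith)
  done

lemma tri_L7:
  fixes a0 b0 c0 :: real
  assumes "a0 < 0" "0 < b0" "c0 < 0" "a0 + b0 < 0" "0 < b0 + c0" "a0 + c0 < 0" "a0 + b0 + c0 < 0"
  shows "\<exists>p1 q1 r1 p2 q2 r2 p3 q3 r3 :: real. (\<forall>a b c. (a * (a0) > 0 \<and> b * (b0) > 0 \<and> c * (c0) > 0 \<and> (a + b) * (a0 + b0) > 0 \<and> (b + c) * (b0 + c0) > 0 \<and> (a + c) * (a0 + c0) > 0 \<and> (a + b + c) * (a0 + b0 + c0) > 0) \<longleftrightarrow> (p1 * a + q1 * b + r1 * c > 0 \<and> p2 * a + q2 * b + r2 * c > 0 \<and> p3 * a + q3 * b + r3 * c > 0)) \<and> (\<forall>a b c. p1 * a + q1 * b + r1 * c = 0 \<and> p2 * a + q2 * b + r2 * c = 0 \<and> p3 * a + q3 * b + r3 * c = 0 \<longrightarrow> a = 0 \<and> b = 0 \<and> c = 0)"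
  apply (rule exI[of _ "0"], rule exI[of _ "0"], rule exI[of _ "-1"], rule exI[of _ "-1"], rule exI[of _ "-1"], rule exI[of _ "0"], rule exI[of _ "0"], rule exI[of _ "1"], rule exI[of _ "1"])
  apply (simp only: neg_prod[OF assms(1)] pos_prod[OF assms(2)] neg_prod[OF assms(3)] neg_prod[OF assms(4)] pos_prod[OF assms(5)] neg_prod[OF assms(6)] neg_prod[OF assms(7)])
  apply (intro conjI allI impI iffI; (elim conjE)?; (intro conjI)?; linarith)
  done

lemma tri_L8:
  fixes a0 b0 c0 :: real
  assumes "a0 < 0" "0 < b0" "c0 < 0" "0 < a0 + b0" "b0 + c0 < 0" "a0 + c0 < 0" "a0 + b0 + c0 < 0"
  shows "\<exists>p1 q1 r1 p2 q2 r2 p3 q3 r3 :: real. (\<forall>a b c. (a * (a0) > 0 \<and> b * (b0) > 0 \<and> c * (c0) > 0 \<and> (a + b) * (a0 + b0) > 0 \<and> (b + c) * (b0 + c0) > 0 \<and> (a + c) * (a0 + c0) > 0 \<and> (a + b + c) * (a0 + b0 + c0) > 0) \<longleftrightarrow> (p1 * a + q1 * b + r1 * c > 0 \<and> p2 * a + q2 * b + r2 * c > 0 \<and> p3 * a + q3 * b + r3 * c > 0)) \<and> (\<forall>a b c. p1 * a + q1 * b + r1 * c = 0 \<and> p2 * a + q2 * b + r2 * c = 0 \<and> p3 * a + q3 * b + r3 * c = 0 \<longrightarrow> a = 0 \<and> b = 0 \<and> c = 0)"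
  apply (rule exI[of _ "-1"], rule exI[of _ "0"], rule exI[of _ "0"], rule exI[of _ "1"], rule exI[of _ "1"], rule exI[of _ "0"], rule exI[of _ "0"], rule exI[of _ "-1"], rule exI[of _ "-1"])
  apply (simp only: neg_prod[OF assms(1)] pos_prod[OF assms(2)] neg_prod[OF assms(3)] pos_prod[OF assms(4)] neg_prod[OF assms(5)] neg_prod[OF assms(6)] neg_prod[OF assms(7)])
  apply (intro conjI allI impI iffI; (elim conjE)?; (intro conjI)?; linarith)
  done

lemma tri_L9:
  fixes a0 b0 c0 :: real
  assumes "a0 < 0" "0 < b0" "c0 < 0" "0 < a0 + b0" "0 < b0 + c0" "a0 + c0 < 0" "a0 + b0 + c0 < 0"
  shows "\<exists>p1 q1 r1 p2 q2 r2 p3 q3 r3 :: real. (\<forall>a b c. (a * (a0) > 0 \<and> b * (b0) > 0 \<and> c * (c0) > 0 \<and> (a + b) * (a0 + b0) > 0 \<and> (b + c) * (b0 + c0) > 0 \<and> (a + c) * (a0 + c0) > 0 \<and> (a + b + c) * (a0 + b0 + c0) > 0) \<longleftrightarrow> (p1 * a + q1 * b + r1 * c > 0 \<and> p2 * a + q2 * b + r2 * c > 0 \<and> p3 * a + q3 * b + r3 * c > 0)) \<and> (\<forall>a b c. p1 * a + q1 * b + r1 * c = 0 \<and> p2 * a + q2 * b + r2 * c = 0 \<and> p3 * a + q3 * b + r3 * c = 0 \<longrightarrow> a = 0 \<and> b = 0 \<and> c = 0)"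
  apply (rule exI[of _ "1"], rule exI[of _ "1"], rule exI[of _ "0"], rule exI[of _ "0"], rule exI[of _ "1"], rule exI[of _ "1"], rule exI[of _ "-1"], rule exI[of _ "-1"], rule exI[of _ "-1"])
  apply (simp only: neg_prod[OF assms(1)] pos_prod[OF assms(2)] neg_prod[OF assms(3)] pos_prod[OF assms(4)] pos_prod[OF assms(5)] neg_prod[OF assms(6)] neg_prod[OF assms(7)])
  apply (intro conjI allI impI iffI; (elim conjE)?; (intro conjI)?; linarith)
  done

lemma tri_L10:
  fixes a0 b0 c0 :: real
  assumes "a0 < 0" "0 < b0" "c0 < 0" "0 < a0 + b0" "0 < b0 + c0" "a0 + c0 < 0" "0 < a0 + b0 + c0"
  shows "\<exists>p1 q1 r1 p2 q2 r2 p3 q3 r3 :: real. (\<forall>a b c. (a * (a0) > 0 \<and> b * (b0) > 0 \<and> c * (c0) > 0 \<and> (a + b) * (a0 + b0) > 0 \<and> (b + c) * (b0 + c0) > 0 \<and> (a + c) * (a0 + c0) > 0 \<and> (a + b + c) * (a0 + b0 + c0) > 0) \<longleftrightarrow> (p1 * a + q1 * b + r1 * c > 0 \<and> p2 * a + q2 * b + r2 * c > 0 \<and> p3 * a + q3 * b + r3 * c > 0)) \<and> (\<forall>a b c. p1 * a + q1 * b + r1 * c = 0 \<and> p2 * a + q2 * b + r2 * c = 0 \<and> p3 * a + q3 * b + r3 * c = 0 \<longrightarrow> a = 0 \<and> b = 0 \<and> c = 0)"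
  apply (rule exI[of _ "-1"], rule exI[of _ "0"], rule exI[of _ "0"], rule exI[of _ "0"], rule exI[of _ "0"], rule exI[of _ "-1"], rule exI[of _ "1"], rule exI[of _ "1"], rule exI[of _ "1"])
  apply (simp only: neg_prod[OF assms(1)] pos_prod[OF assms(2)] neg_prod[OF assms(3)] pos_prod[OF assms(4)] pos_prod[OF assms(5)] neg_prod[OF assms(6)] pos_prod[OF assms(7)])
  apply (intro conjI allI impI iffI; (elim conjE)?; (intro conjI)?; linarith)
  done

lemma tri_L11:
  fixes a0 b0 c0 :: real
  assumes "a0 < 0" "0 < b0" "0 < c0" "a0 + b0 < 0" "0 < b0 + c0" "a0 + c0 < 0" "a0 + b0 + c0 < 0"
  shows "\<exists>p1 q1 r1 p2 q2 r2 p3 q3 r3 :: real. (\<forall>a b c. (a * (a0) > 0 \<and> b * (b0) > 0 \<and> c * (c0) > 0 \<and> (a + b) * (a0 + b0) > 0 \<and> (b + c) * (b0 + c0) > 0 \<and> (a + c) * (a0 + c0) > 0 \<and> (a + b + c) * (a0 + b0 + c0) > 0) \<longleftrightarrow> (p1 * a + q1 * b + r1 * c > 0 \<and> p2 * a + q2 * b + r2 * c > 0 \<and> p3 * a + q3 * b + r3 * c > 0)) \<and> (\<forall>a b c. p1 * a + q1 * b + r1 * c = 0 \<and> p2 * a + q2 * b + r2 * c = 0 \<and> p3 * a + q3 * b + r3 * c = 0 \<longrightarrow> a = 0 \<and> b = 0 \<and> c = 0)"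
  apply (rule exI[of _ "0"], rule exI[of _ "1"], rule exI[of _ "0"], rule exI[of _ "0"], rule exI[of _ "0"], rule exI[of _ "1"], rule exI[of _ "-1"], rule exI[of _ "-1"], rule exI[of _ "-1"])
  apply (simp only: neg_prod[OF assms(1)] pos_prod[OF assms(2)] pos_prod[OF assms(3)] neg_prod[OF assms(4)] pos_prod[OF assms(5)] neg_prod[OF assms(6)] neg_prod[OF assms(7)])
  apply (intro conjI allI impI iffI; (elim conjE)?; (intro conjI)?; linarith)
  done

lemma tri_L12:
  fixes a0 b0 c0 :: real
  assumes "a0 < 0" "0 < b0" "0 < c0" "a0 + b0 < 0" "0 < b0 + c0" "a0 + c0 < 0" "0 < a0 + b0 + c0"
  shows "\<exists>p1 q1 r1 p2 q2 r2 p3 q3 r3 :: real. (\<forall>a b c. (a * (a0) > 0 \<and> b * (b0) > 0 \<and> c * (c0) > 0 \<and> (a + b) * (a0 + b0) > 0 \<and> (b + c) * (b0 + c0) > 0 \<and> (a + c) * (a0 + c0) > 0 \<and> (a + b + c) * (a0 + b0 + c0) > 0) \<longleftrightarrow> (p1 * a + q1 * b + r1 * c > 0 \<and> p2 * a + q2 * b + r2 * c > 0 \<and> p3 * a + q3 * b + r3 * c > 0)) \<and> (\<forall>a b c. p1 * a + q1 * b + r1 * c = 0 \<and> p2 * a + q2 * b + r2 * c = 0 \<and> p3 * a + q3 * b + r3 * c = 0 \<longrightarrow> a = 0 \<and> b = 0 \<and> c = 0)"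
  apply (rule exI[of _ "-1"], rule exI[of _ "-1"], rule exI[of _ "0"], rule exI[of _ "-1"], rule exI[of _ "0"], rule exI[of _ "-1"], rule exI[of _ "1"], rule exI[of _ "1"], rule exI[of _ "1"])
  apply (simp only: neg_prod[OF assms(1)] pos_prod[OF assms(2)] pos_prod[OF assms(3)] neg_prod[OF assms(4)] pos_prod[OF assms(5)] neg_prod[OF assms(6)] pos_prod[OF assms(7)])
  apply (intro conjI allI impI iffI; (elim conjE)?; (intro conjI)?; linarith)
  done

lemma tri_L13:
  fixes a0 b0 c0 :: real
  assumes "a0 < 0" "0 < b0" "0 < c0" "a0 + b0 < 0" "0 < b0 + c0" "0 < a0 + c0" "0 < a0 + b0 + c0"
  shows "\<exists>p1 q1 r1 p2 q2 r2 p3 q3 r3 :: real. (\<forall>a b c. (a * (a0) > 0 \<and> b * (b0) > 0 \<and> c * (c0) > 0 \<and> (a + b) * (a0 + b0) > 0 \<and> (b + c) * (b0 + c0) > 0 \<and> (a + c) * (a0 + c0) > 0 \<and> (a + b + c) * (a0 + b0 + c0) > 0) \<longleftrightarrow> (p1 * a + q1 * b + r1 * c > 0 \<and> p2 * a + q2 * b + r2 * c > 0 \<and> p3 * a + q3 * b + r3 * c > 0)) \<and> (\<forall>a b c. p1 * a + q1 * b + r1 * c = 0 \<and> p2 * a + q2 * b + r2 * c = 0 \<and> p3 * a + q3 * b + r3 * c = 0 \<longrightarrow> a = 0 \<and> b = 0 \<and> c = 0)"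
  apply (rule exI[of _ "0"], rule exI[of _ "1"], rule exI[of _ "0"], rule exI[of _ "-1"], rule exI[of _ "-1"], rule exI[of _ "0"], rule exI[of _ "1"], rule exI[of _ "0"], rule exI[of _ "1"])
  apply (simp only: neg_prod[OF assms(1)] pos_prod[OF assms(2)] pos_prod[OF assms(3)] neg_prod[OF assms(4)] pos_prod[OF assms(5)] pos_prod[OF assms(6)] pos_prod[OF assms(7)])
  apply (intro conjI allI impI iffI; (elim conjE)?; (intro conjI)?; linarith)
  done

lemma tri_L14:
  fixes a0 b0 c0 :: real
  assumes "a0 < 0" "0 < b0" "0 < c0" "0 < a0 + b0" "0 < b0 + c0" "a0 + c0 < 0" "0 < a0 + b0 + c0"
  shows "\<exists>p1 q1 r1 p2 q2 r2 p3 q3 r3 :: real. (\<forall>a b c. (a * (a0) > 0 \<and> b * (b0) > 0 \<and> c * (c0) > 0 \<and> (a + b) * (a0 + b0) > 0 \<and> (b + c) * (b0 + c0) > 0 \<and> (a + c) * (a0 + c0) > 0 \<and> (a + b + c) * (a0 + b0 + c0) > 0) \<longleftrightarrow> (p1 * a + q1 * b + r1 * c > 0 \<and> p2 * a + q2 * b + r2 * c > 0 \<and> p3 * a + q3 * b + r3 * c > 0)) \<and> (\<forall>a b c. p1 * a + q1 * b + r1 * c = 0 \<and> p2 * a + q2 * b + r2 * c = 0 \<and> p3 * a + q3 * b + r3 * c = 0 \<longrightarrow> a = 0 \<and> b = 0 \<and> c = 0)"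
  apply (rule exI[of _ "0"], rule exI[of _ "0"], rule exI[of _ "1"], rule exI[of _ "1"], rule exI[of _ "1"], rule exI[of _ "0"], rule exI[of _ "-1"], rule exI[of _ "0"], rule exI[of _ "-1"])
  apply (simp only: neg_prod[OF assms(1)] pos_prod[OF assms(2)] pos_prod[OF assms(3)] pos_prod[OF assms(4)] pos_prod[OF assms(5)] neg_prod[OF assms(6)] pos_prod[OF assms(7)])
  apply (intro conjI allI impI iffI; (elim conjE)?; (intro conjI)?; linarith)
  done

lemma tri_L15:
  fixes a0 b0 c0 :: real
  assumes "a0 < 0" "0 < b0" "0 < c0" "0 < a0 + b0" "0 < b0 + c0" "0 < a0 + c0" "0 < a0 + b0 + c0"
  shows "\<exists>p1 q1 r1 p2 q2 r2 p3 q3 r3 :: real. (\<forall>a b c. (a * (a0) > 0 \<and> b * (b0) > 0 \<and> c * (c0) > 0 \<and> (a + b) * (a0 + b0) > 0 \<and> (b + c) * (b0 + c0) > 0 \<and> (a + c) * (a0 + c0) > 0 \<and> (a + b + c) * (a0 + b0 + c0) > 0) \<longleftrightarrow> (p1 * a + q1 * b + r1 * c > 0 \<and> p2 * a + q2 * b + r2 * c > 0 \<and> p3 * a + q3 * b + r3 * c > 0)) \<and> (\<forall>a b c. p1 * a + q1 * b + r1 * c = 0 \<and> p2 * a + q2 * b + r2 * c = 0 \<and> p3 * a + q3 * b + r3 * c = 0 \<longrightarrow> a = 0 \<and> b = 0 \<and> c = 0)"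
  apply (rule exI[of _ "-1"], rule exI[of _ "0"], rule exI[of _ "0"], rule exI[of _ "1"], rule exI[of _ "1"], rule exI[of _ "0"], rule exI[of _ "1"], rule exI[of _ "0"], rule exI[of _ "1"])
  apply (simp only: neg_prod[OF assms(1)] pos_prod[OF assms(2)] pos_prod[OF assms(3)] pos_prod[OF assms(4)] pos_prod[OF assms(5)] pos_prod[OF assms(6)] pos_prod[OF assms(7)])
  apply (intro conjI allI impI iffI; (elim conjE)?; (intro conjI)?; linarith)
  done

lemma tri_L16:
  fixes a0 b0 c0 :: real
  assumes "0 < a0" "b0 < 0" "c0 < 0" "a0 + b0 < 0" "b0 + c0 < 0" "a0 + c0 < 0" "a0 + b0 + c0 < 0"
  shows "\<exists>p1 q1 r1 p2 q2 r2 p3 q3 r3 :: real. (\<forall>a b c. (a * (a0) > 0 \<and> b * (b0) > 0 \<and> c * (c0) > 0 \<and> (a + b) * (a0 + b0) > 0 \<and> (b + c) * (b0 + c0) > 0 \<and> (a + c) * (a0 + c0) > 0 \<and> (a + b + c) * (a0 + b0 + c0) > 0) \<longleftrightarrow> (p1 * a + q1 * b + r1 * c > 0 \<and> p2 * a + q2 * b + r2 * c > 0 \<and> p3 * a + q3 * b + r3 * c > 0)) \<and> (\<forall>a b c. p1 * a + q1 * b + r1 * c = 0 \<and> p2 * a + q2 * b + r2 * c = 0 \<and> p3 * a + q3 * b + r3 * c = 0 \<longrightarrow> a = 0 \<and> b = 0 \<and> c = 0)"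
  apply (rule exI[of _ "1"], rule exI[of _ "0"], rule exI[of _ "0"], rule exI[of _ "-1"], rule exI[of _ "-1"], rule exI[of _ "0"], rule exI[of _ "-1"], rule exI[of _ "0"], rule exI[of _ "-1"])
  apply (simp only: pos_prod[OF assms(1)] neg_prod[OF assms(2)] neg_prod[OF assms(3)] neg_prod[OF assms(4)] neg_prod[OF assms(5)] neg_prod[OF assms(6)] neg_prod[OF assms(7)])
  apply (intro conjI allI impI iffI; (elim conjE)?; (intro conjI)?; linarith)
  done

lemma tri_L17:
  fixes a0 b0 c0 :: real
  assumes "0 < a0" "b0 < 0" "c0 < 0" "a0 + b0 < 0" "b0 + c0 < 0" "0 < a0 + c0" "a0 + b0 + c0 < 0"
  shows "\<exists>p1 q1 r1 p2 q2 r2 p3 q3 r3 :: real. (\<forall>a b c. (a * (a0) > 0 \<and> b * (b0) > 0 \<and> c * (c0) > 0 \<and> (a + b) * (a0 + b0) > 0 \<and> (b + c) * (b0 + c0) > 0 \<and> (a + c) * (a0 + c0) > 0 \<and> (a + b + c) * (a0 + b0 + c0) > 0) \<longleftrightarrow> (p1 * a + q1 * b + r1 * c > 0 \<and> p2 * a + q2 * b + r2 * c > 0 \<and> p3 * a + q3 * b + r3 * c > 0)) \<and> (\<forall>a b c. p1 * a + q1 * b + r1 * c = 0 \<and> p2 * a + q2 * b + r2 * c = 0 \<and> p3 * a + q3 * b + r3 * c = 0 \<longrightarrow> a = 0 \<and> b = 0 \<and> c = 0)"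
  apply (rule exI[of _ "0"], rule exI[of _ "0"], rule exI[of _ "-1"], rule exI[of _ "-1"], rule exI[of _ "-1"], rule exI[of _ "0"], rule exI[of _ "1"], rule exI[of _ "0"], rule exI[of _ "1"])
  apply (simp only: pos_prod[OF assms(1)] neg_prod[OF assms(2)] neg_prod[OF assms(3)] neg_prod[OF assms(4)] neg_prod[OF assms(5)] pos_prod[OF assms(6)] neg_prod[OF assms(7)])
  apply (intro conjI allI impI iffI; (elim conjE)?; (intro conjI)?; linarith)
  done

lemma tri_L18:
  fixes a0 b0 c0 :: real
  assumes "0 < a0" "b0 < 0" "c0 < 0" "0 < a0 + b0" "b0 + c0 < 0" "a0 + c0 < 0" "a0 + b0 + c0 < 0"
  shows "\<exists>p1 q1 r1 p2 q2 r2 p3 q3 r3 :: real. (\<forall>a b c. (a * (a0) > 0 \<and> b * (b0) > 0 \<and> c * (c0) > 0 \<and> (a + b) * (a0 + b0) > 0 \<and> (b + c) * (b0 + c0) > 0 \<and> (a + c) * (a0 + c0) > 0 \<and> (a + b + c) * (a0 + b0 + c0) > 0) \<longleftrightarrow> (p1 * a + q1 * b + r1 * c > 0 \<and> p2 * a + q2 * b + r2 * c > 0 \<and> p3 * a + q3 * b + r3 * c > 0)) \<and> (\<forall>a b c. p1 * a + q1 * b + r1 * c = 0 \<and> p2 * a + q2 * b + r2 * c = 0 \<and> p3 * a + q3 * b + r3 * c = 0 \<longrightarrow> a = 0 \<and> b = 0 \<and> c = 0)"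
  apply (rule exI[of _ "0"], rule exI[of _ "-1"], rule exI[of _ "0"], rule exI[of _ "1"], rule exI[of _ "1"], rule exI[of _ "0"], rule exI[of _ "-1"], rule exI[of _ "0"], rule exI[of _ "-1"])
  apply (simp only: pos_prod[OF assms(1)] neg_prod[OF assms(2)] neg_prod[OF assms(3)] pos_prod[OF assms(4)] neg_prod[OF assms(5)] neg_prod[OF assms(6)] neg_prod[OF assms(7)])
  apply (intro conjI allI impI iffI; (elim conjE)?; (intro conjI)?; linarith)
  done

lemma tri_L19:
  fixes a0 b0 c0 :: real
  assumes "0 < a0" "b0 < 0" "c0 < 0" "0 < a0 + b0" "b0 + c0 < 0" "0 < a0 + c0" "a0 + b0 + c0 < 0"
  shows "\<exists>p1 q1 r1 p2 q2 r2 p3 q3 r3 :: real. (\<forall>a b c. (a * (a0) > 0 \<and> b * (b0) > 0 \<and> c * (c0) > 0 \<and> (a + b) * (a0 + b0) > 0 \<and> (b + c) * (b0 + c0) > 0 \<and> (a + c) * (a0 + c0) > 0 \<and> (a + b + c) * (a0 + b0 + c0) > 0) \<longleftrightarrow> (p1 * a + q1 * b + r1 * c > 0 \<and> p2 * a + q2 * b + r2 * c > 0 \<and> p3 * a + q3 * b + r3 * c > 0)) \<and> (\<forall>a b c. p1 * a + q1 * b + r1 * c = 0 \<and> p2 * a + q2 * b + r2 * c = 0 \<and> p3 * a + q3 * b + r3 * c = 0 \<longrightarrow> a = 0 \<and> b = 0 \<and> c = 0)"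
  apply (rule exI[of _ "1"], rule exI[of _ "1"], rule exI[of _ "0"], rule exI[of _ "1"], rule exI[of _ "0"], rule exI[of _ "1"], rule exI[of _ "-1"], rule exI[of _ "-1"], rule exI[of _ "-1"])
  apply (simp only: pos_prod[OF assms(1)] neg_prod[OF assms(2)] neg_prod[OF assms(3)] pos_prod[OF assms(4)] neg_prod[OF assms(5)] pos_prod[OF assms(6)] neg_prod[OF assms(7)])
  apply (intro conjI allI impI iffI; (elim conjE)?; (intro conjI)?; linarith)
  done

lemma tri_L20:
  fixes a0 b0 c0 :: real
  assumes "0 < a0" "b0 < 0" "c0 < 0" "0 < a0 + b0" "b0 + c0 < 0" "0 < a0 + c0" "0 < a0 + b0 + c0"
  shows "\<exists>p1 q1 r1 p2 q2 r2 p3 q3 r3 :: real. (\<forall>a b c. (a * (a0) > 0 \<and> b * (b0) > 0 \<and> c * (c0) > 0 \<and> (a + b) * (a0 + b0) > 0 \<and> (b + c) * (b0 + c0) > 0 \<and> (a + c) * (a0 + c0) > 0 \<and> (a + b + c) * (a0 + b0 + c0) > 0) \<longleftrightarrow> (p1 * a + q1 * b + r1 * c > 0 \<and> p2 * a + q2 * b + r2 * c > 0 \<and> p3 * a + q3 * b + r3 * c > 0)) \<and> (\<forall>a b c. p1 * a + q1 * b + r1 * c = 0 \<and> p2 * a + q2 * b + r2 * c = 0 \<and> p3 * a + q3 * b + r3 * c = 0 \<longrightarrow> a = 0 \<and> b = 0 \<and> c = 0)"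
  apply (rule exI[of _ "0"], rule exI[of _ "-1"], rule exI[of _ "0"], rule exI[of _ "0"], rule exI[of _ "0"], rule exI[of _ "-1"], rule exI[of _ "1"], rule exI[of _ "1"], rule exI[of _ "1"])
  apply (simp only: pos_prod[OF assms(1)] neg_prod[OF assms(2)] neg_prod[OF assms(3)] pos_prod[OF assms(4)] neg_prod[OF assms(5)] pos_prod[OF assms(6)] pos_prod[OF assms(7)])
  apply (intro conjI allI impI iffI; (elim conjE)?; (intro conjI)?; linarith)
  done

lemma tri_L21:
  fixes a0 b0 c0 :: real
  assumes "0 < a0" "b0 < 0" "0 < c0" "a0 + b0 < 0" "b0 + c0 < 0" "0 < a0 + c0" "a0 + b0 + c0 < 0"
  shows "\<exists>p1 q1 r1 p2 q2 r2 p3 q3 r3 :: real. (\<forall>a b c. (a * (a0) > 0 \<and> b * (b0) > 0 \<and> c * (c0) > 0 \<and> (a + b) * (a0 + b0) > 0 \<and> (b + c) * (b0 + c0) > 0 \<and> (a + c) * (a0 + c0) > 0 \<and> (a + b + c) * (a0 + b0 + c0) > 0) \<longleftrightarrow> (p1 * a + q1 * b + r1 * c > 0 \<and> p2 * a + q2 * b + r2 * c > 0 \<and> p3 * a + q3 * b + r3 * c > 0)) \<and> (\<forall>a b c. p1 * a + q1 * b + r1 * c = 0 \<and> p2 * a + q2 * b + r2 * c = 0 \<and> p3 * a + q3 * b + r3 * c = 0 \<longrightarrow> a = 0 \<and> b = 0 \<and> c = 0)"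
  apply (rule exI[of _ "1"], rule exI[of _ "0"], rule exI[of _ "0"], rule exI[of _ "0"], rule exI[of _ "0"], rule exI[of _ "1"], rule exI[of _ "-1"], rule exI[of _ "-1"], rule exI[of _ "-1"])
  apply (simp only: pos_prod[OF assms(1)] neg_prod[OF assms(2)] pos_prod[OF assms(3)] neg_prod[OF assms(4)] neg_prod[OF assms(5)] pos_prod[OF assms(6)] neg_prod[OF assms(7)])
  apply (intro conjI allI impI iffI; (elim conjE)?; (intro conjI)?; linarith)
  done

lemma tri_L22:
  fixes a0 b0 c0 :: real
  assumes "0 < a0" "b0 < 0" "0 < c0" "a0 + b0 < 0" "b0 + c0 < 0" "0 < a0 + c0" "0 < a0 + b0 + c0"
  shows "\<exists>p1 q1 r1 p2 q2 r2 p3 q3 r3 :: real. (\<forall>a b c. (a * (a0) > 0 \<and> b * (b0) > 0 \<and> c * (c0) > 0 \<and> (a + b) * (a0 + b0) > 0 \<and> (b + c) * (b0 + c0) > 0 \<and> (a + c) * (a0 + c0) > 0 \<and> (a + b + c) * (a0 + b0 + c0) > 0) \<longleftrightarrow> (p1 * a + q1 * b + r1 * c > 0 \<and> p2 * a + q2 * b + r2 * c > 0 \<and> p3 * a + q3 * b + r3 * c > 0)) \<and> (\<forall>a b c. p1 * a + q1 * b + r1 * c = 0 \<and> p2 * a + q2 * b + r2 * c = 0 \<and> p3 * a + q3 * b + r3 * c = 0 \<longrightarrow> a = 0 \<and> b = 0 \<and> c = 0)"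
  apply (rule exI[of _ "-1"], rule exI[of _ "-1"], rule exI[of _ "0"], rule exI[of _ "0"], rule exI[of _ "-1"], rule exI[of _ "-1"], rule exI[of _ "1"], rule exI[of _ "1"], rule exI[of _ "1"])
  apply (simp only: pos_prod[OF assms(1)] neg_prod[OF assms(2)] pos_prod[OF assms(3)] neg_prod[OF assms(4)] neg_prod[OF assms(5)] pos_prod[OF assms(6)] pos_prod[OF assms(7)])
  apply (intro conjI allI impI iffI; (elim conjE)?; (intro conjI)?; linarith)
  done

lemma tri_L23:
  fixes a0 b0 c0 :: real
  assumes "0 < a0" "b0 < 0" "0 < c0" "a0 + b0 < 0" "0 < b0 + c0" "0 < a0 + c0" "0 < a0 + b0 + c0"
  shows "\<exists>p1 q1 r1 p2 q2 r2 p3 q3 r3 :: real. (\<forall>a b c. (a * (a0) > 0 \<and> b * (b0) > 0 \<and> c * (c0) > 0 \<and> (a + b) * (a0 + b0) > 0 \<and> (b + c) * (b0 + c0) > 0 \<and> (a + c) * (a0 + c0) > 0 \<and> (a + b + c) * (a0 + b0 + c0) > 0) \<longleftrightarrow> (p1 * a + q1 * b + r1 * c > 0 \<and> p2 * a + q2 * b + r2 * c > 0 \<and> p3 * a + q3 * b + r3 * c > 0)) \<and> (\<forall>a b c. p1 * a + q1 * b + r1 * c = 0 \<and> p2 * a + q2 * b + r2 * c = 0 \<and> p3 * a + q3 * b + r3 * c = 0 \<longrightarrow> a = 0 \<and> b = 0 \<and> c = 0)"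
  apply (rule exI[of _ "1"], rule exI[of _ "0"], rule exI[of _ "0"], rule exI[of _ "-1"], rule exI[of _ "-1"], rule exI[of _ "0"], rule exI[of _ "0"], rule exI[of _ "1"], rule exI[of _ "1"])
  apply (simp only: pos_prod[OF assms(1)] neg_prod[OF assms(2)] pos_prod[OF assms(3)] neg_prod[OF assms(4)] pos_prod[OF assms(5)] pos_prod[OF assms(6)] pos_prod[OF assms(7)])
  apply (intro conjI allI impI iffI; (elim conjE)?; (intro conjI)?; linarith)
  done

lemma tri_L24:
  fixes a0 b0 c0 :: real
  assumes "0 < a0" "b0 < 0" "0 < c0" "0 < a0 + b0" "b0 + c0 < 0" "0 < a0 + c0" "0 < a0 + b0 + c0"
  shows "\<exists>p1 q1 r1 p2 q2 r2 p3 q3 r3 :: real. (\<forall>a b c. (a * (a0) > 0 \<and> b * (b0) > 0 \<and> c * (c0) > 0 \<and> (a + b) * (a0 + b0) > 0 \<and> (b + c) * (b0 + c0) > 0 \<and> (a + c) * (a0 + c0) > 0 \<and> (a + b + c) * (a0 + b0 + c0) > 0) \<longleftrightarrow> (p1 * a + q1 * b + r1 * c > 0 \<and> p2 * a + q2 * b + r2 * c > 0 \<and> p3 * a + q3 * b + r3 * c > 0)) \<and> (\<forall>a b c. p1 * a + q1 * b + r1 * c = 0 \<and> p2 * a + q2 * b + r2 * c = 0 \<and> p3 * a + q3 * b + r3 * c = 0 \<longrightarrow> a = 0 \<and> b = 0 \<and> c = 0)"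
  apply (rule exI[of _ "0"], rule exI[of _ "0"], rule exI[of _ "1"], rule exI[of _ "1"], rule exI[of _ "1"], rule exI[of _ "0"], rule exI[of _ "0"], rule exI[of _ "-1"], rule exI[of _ "-1"])
  apply (simp only: pos_prod[OF assms(1)] neg_prod[OF assms(2)] pos_prod[OF assms(3)] pos_prod[OF assms(4)] neg_prod[OF assms(5)] pos_prod[OF assms(6)] pos_prod[OF assms(7)])
  apply (intro conjI allI impI iffI; (elim conjE)?; (intro conjI)?; linarith)
  done

lemma tri_L25:
  fixes a0 b0 c0 :: real
  assumes "0 < a0" "b0 < 0" "0 < c0" "0 < a0 + b0" "0 < b0 + c0" "0 < a0 + c0" "0 < a0 + b0 + c0"
  shows "\<exists>p1 q1 r1 p2 q2 r2 p3 q3 r3 :: real. (\<forall>a b c. (a * (a0) > 0 \<and> b * (b0) > 0 \<and> c * (c0) > 0 \<and> (a + b) * (a0 + b0) > 0 \<and> (b + c) * (b0 + c0) > 0 \<and> (a + c) * (a0 + c0) > 0 \<and> (a + b + c) * (a0 + b0 + c0) > 0) \<longleftrightarrow> (p1 * a + q1 * b + r1 * c > 0 \<and> p2 * a + q2 * b + r2 * c > 0 \<and> p3 * a + q3 * b + r3 * c > 0)) \<and> (\<forall>a b c. p1 * a + q1 * b + r1 * c = 0 \<and> p2 * a + q2 * b + r2 * c = 0 \<and> p3 * a + q3 * b + r3 * c = 0 \<longrightarrow> a = 0 \<and> b = 0 \<and> c = 0)"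
  apply (rule exI[of _ "0"], rule exI[of _ "-1"], rule exI[of _ "0"], rule exI[of _ "1"], rule exI[of _ "1"], rule exI[of _ "0"], rule exI[of _ "0"], rule exI[of _ "1"], rule exI[of _ "1"])
  apply (simp only: pos_prod[OF assms(1)] neg_prod[OF assms(2)] pos_prod[OF assms(3)] pos_prod[OF assms(4)] pos_prod[OF assms(5)] pos_prod[OF assms(6)] pos_prod[OF assms(7)])
  apply (intro conjI allI impI iffI; (elim conjE)?; (intro conjI)?; linarith)
  done

lemma tri_L26:
  fixes a0 b0 c0 :: real
  assumes "0 < a0" "0 < b0" "c0 < 0" "0 < a0 + b0" "b0 + c0 < 0" "a0 + c0 < 0" "a0 + b0 + c0 < 0"
  shows "\<exists>p1 q1 r1 p2 q2 r2 p3 q3 r3 :: real. (\<forall>a b c. (a * (a0) > 0 \<and> b * (b0) > 0 \<and> c * (c0) > 0 \<and> (a + b) * (a0 + b0) > 0 \<and> (b + c) * (b0 + c0) > 0 \<and> (a + c) * (a0 + c0) > 0 \<and> (a + b + c) * (a0 + b0 + c0) > 0) \<longleftrightarrow> (p1 * a + q1 * b + r1 * c > 0 \<and> p2 * a + q2 * b + r2 * c > 0 \<and> p3 * a + q3 * b + r3 * c > 0)) \<and> (\<forall>a b c. p1 * a + q1 * b + r1 * c = 0 \<and> p2 * a + q2 * b + r2 * c = 0 \<and> p3 * a + q3 * b + r3 * c = 0 \<longrightarrow> a = 0 \<and> b = 0 \<and> c = 0)"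
  apply (rule exI[of _ "1"], rule exI[of _ "0"], rule exI[of _ "0"], rule exI[of _ "0"], rule exI[of _ "1"], rule exI[of _ "0"], rule exI[of _ "-1"], rule exI[of _ "-1"], rule exI[of _ "-1"])
  apply (simp only: pos_prod[OF assms(1)] pos_prod[OF assms(2)] neg_prod[OF assms(3)] pos_prod[OF assms(4)] neg_prod[OF assms(5)] neg_prod[OF assms(6)] neg_prod[OF assms(7)])
  apply (intro conjI allI impI iffI; (elim conjE)?; (intro conjI)?; linarith)
  done

lemma tri_L27:
  fixes a0 b0 c0 :: real
  assumes "0 < a0" "0 < b0" "c0 < 0" "0 < a0 + b0" "b0 + c0 < 0" "a0 + c0 < 0" "0 < a0 + b0 + c0"
  shows "\<exists>p1 q1 r1 p2 q2 r2 p3 q3 r3 :: real. (\<forall>a b c. (a * (a0) > 0 \<and> b * (b0) > 0 \<and> c * (c0) > 0 \<and> (a + b) * (a0 + b0) > 0 \<and> (b + c) * (b0 + c0) > 0 \<and> (a + c) * (a0 + c0) > 0 \<and> (a + b + c) * (a0 + b0 + c0) > 0) \<longleftrightarrow> (p1 * a + q1 * b + r1 * c > 0 \<and> p2 * a + q2 * b + r2 * c > 0 \<and> p3 * a + q3 * b + r3 * c > 0)) \<and> (\<forall>a b c. p1 * a + q1 * b + r1 * c = 0 \<and> p2 * a + q2 * b + r2 * c = 0 \<and> p3 * a + q3 * b + r3 * c = 0 \<longrightarrow> a = 0 \<and> b = 0 \<and> c = 0)"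
  apply (rule exI[of _ "0"], rule exI[of _ "-1"], rule exI[of _ "-1"], rule exI[of _ "-1"], rule exI[of _ "0"], rule exI[of _ "-1"], rule exI[of _ "1"], rule exI[of _ "1"], rule exI[of _ "1"])
  apply (simp only: pos_prod[OF assms(1)] pos_prod[OF assms(2)] neg_prod[OF assms(3)] pos_prod[OF assms(4)] neg_prod[OF assms(5)] neg_prod[OF assms(6)] pos_prod[OF assms(7)])
  apply (intro conjI allI impI iffI; (elim conjE)?; (intro conjI)?; linarith)
  done

lemma tri_L28:
  fixes a0 b0 c0 :: real
  assumes "0 < a0" "0 < b0" "c0 < 0" "0 < a0 + b0" "b0 + c0 < 0" "0 < a0 + c0" "0 < a0 + b0 + c0"
  shows "\<exists>p1 q1 r1 p2 q2 r2 p3 q3 r3 :: real. (\<forall>a b c. (a * (a0) > 0 \<and> b * (b0) > 0 \<and> c * (c0) > 0 \<and> (a + b) * (a0 + b0) > 0 \<and> (b + c) * (b0 + c0) > 0 \<and> (a + c) * (a0 + c0) > 0 \<and> (a + b + c) * (a0 + b0 + c0) > 0) \<longleftrightarrow> (p1 * a + q1 * b + r1 * c > 0 \<and> p2 * a + q2 * b + r2 * c > 0 \<and> p3 * a + q3 * b + r3 * c > 0)) \<and> (\<forall>a b c. p1 * a + q1 * b + r1 * c = 0 \<and> p2 * a + q2 * b + r2 * c = 0 \<and> p3 * a + q3 * b + r3 * c = 0 \<longrightarrow> a = 0 \<and> b = 0 \<and> c = 0)"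
  apply (rule exI[of _ "0"], rule exI[of _ "1"], rule exI[of _ "0"], rule exI[of _ "0"], rule exI[of _ "-1"], rule exI[of _ "-1"], rule exI[of _ "1"], rule exI[of _ "0"], rule exI[of _ "1"])
  apply (simp only: pos_prod[OF assms(1)] pos_prod[OF assms(2)] neg_prod[OF assms(3)] pos_prod[OF assms(4)] neg_prod[OF assms(5)] pos_prod[OF assms(6)] pos_prod[OF assms(7)])
  apply (intro conjI allI impI iffI; (elim conjE)?; (intro conjI)?; linarith)
  done

lemma tri_L29:
  fixes a0 b0 c0 :: real
  assumes "0 < a0" "0 < b0" "c0 < 0" "0 < a0 + b0" "0 < b0 + c0" "a0 + c0 < 0" "0 < a0 + b0 + c0"
  shows "\<exists>p1 q1 r1 p2 q2 r2 p3 q3 r3 :: real. (\<forall>a b c. (a * (a0) > 0 \<and> b * (b0) > 0 \<and> c * (c0) > 0 \<and> (a + b) * (a0 + b0) > 0 \<and> (b + c) * (b0 + c0) > 0 \<and> (a + c) * (a0 + c0) > 0 \<and> (a + b + c) * (a0 + b0 + c0) > 0) \<longleftrightarrow> (p1 * a + q1 * b + r1 * c > 0 \<and> p2 * a + q2 * b + r2 * c > 0 \<and> p3 * a + q3 * b + r3 * c > 0)) \<and> (\<forall>a b c. p1 * a + q1 * b + r1 * c = 0 \<and> p2 * a + q2 * b + r2 * c = 0 \<and> p3 * a + q3 * b + r3 * c = 0 \<longrightarrow> a = 0 \<and> b = 0 \<and> c = 0)"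
  apply (rule exI[of _ "1"], rule exI[of _ "0"], rule exI[of _ "0"], rule exI[of _ "0"], rule exI[of _ "1"], rule exI[of _ "1"], rule exI[of _ "-1"], rule exI[of _ "0"], rule exI[of _ "-1"])
  apply (simp only: pos_prod[OF assms(1)] pos_prod[OF assms(2)] neg_prod[OF assms(3)] pos_prod[OF assms(4)] pos_prod[OF assms(5)] neg_prod[OF assms(6)] pos_prod[OF assms(7)])
  apply (intro conjI allI impI iffI; (elim conjE)?; (intro conjI)?; linarith)
  done

lemma tri_L30:
  fixes a0 b0 c0 :: real
  assumes "0 < a0" "0 < b0" "c0 < 0" "0 < a0 + b0" "0 < b0 + c0" "0 < a0 + c0" "0 < a0 + b0 + c0"
  shows "\<exists>p1 q1 r1 p2 q2 r2 p3 q3 r3 :: real. (\<forall>a b c. (a * (a0) > 0 \<and> b * (b0) > 0 \<and> c * (c0) > 0 \<and> (a + b) * (a0 + b0) > 0 \<and> (b + c) * (b0 + c0) > 0 \<and> (a + c) * (a0 + c0) > 0 \<and> (a + b + c) * (a0 + b0 + c0) > 0) \<longleftrightarrow> (p1 * a + q1 * b + r1 * c > 0 \<and> p2 * a + q2 * b + r2 * c > 0 \<and> p3 * a + q3 * b + r3 * c > 0)) \<and> (\<forall>a b c. p1 * a + q1 * b + r1 * c = 0 \<and> p2 * a + q2 * b + r2 * c = 0 \<and> p3 * a + q3 * b + r3 * c = 0 \<longrightarrow> a = 0 \<and> b = 0 \<and> c = 0)"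
  apply (rule exI[of _ "0"], rule exI[of _ "0"], rule exI[of _ "-1"], rule exI[of _ "0"], rule exI[of _ "1"], rule exI[of _ "1"], rule exI[of _ "1"], rule exI[of _ "0"], rule exI[of _ "1"])
  apply (simp only: pos_prod[OF assms(1)] pos_prod[OF assms(2)] neg_prod[OF assms(3)] pos_prod[OF assms(4)] pos_prod[OF assms(5)] pos_prod[OF assms(6)] pos_prod[OF assms(7)])
  apply (intro conjI allI impI iffI; (elim conjE)?; (intro conjI)?; linarith)
  done

lemma tri_L31:
  fixes a0 b0 c0 :: real
  assumes "0 < a0" "0 < b0" "0 < c0" "0 < a0 + b0" "0 < b0 + c0" "0 < a0 + c0" "0 < a0 + b0 + c0"
  shows "\<exists>p1 q1 r1 p2 q2 r2 p3 q3 r3 :: real. (\<forall>a b c. (a * (a0) > 0 \<and> b * (b0) > 0 \<and> c * (c0) > 0 \<and> (a + b) * (a0 + b0) > 0 \<and> (b + c) * (b0 + c0) > 0 \<and> (a + c) * (a0 + c0) > 0 \<and> (a + b + c) * (a0 + b0 + c0) > 0) \<longleftrightarrow> (p1 * a + q1 * b + r1 * c > 0 \<and> p2 * a + q2 * b + r2 * c > 0 \<and> p3 * a + q3 * b + r3 * c > 0)) \<and> (\<forall>a b c. p1 * a + q1 * b + r1 * c = 0 \<and> p2 * a + q2 * b + r2 * c = 0 \<and> p3 * a + q3 * b + r3 * c = 0 \<longrightarrow> a = 0 \<and> b = 0 \<and> c = 0)"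
  apply (rule exI[of _ "1"], rule exI[of _ "0"], rule exI[of _ "0"], rule exI[of _ "0"], rule exI[of _ "1"], rule exI[of _ "0"], rule exI[of _ "0"], rule exI[of _ "0"], rule exI[of _ "1"])
  apply (simp only: pos_prod[OF assms(1)] pos_prod[OF assms(2)] pos_prod[OF assms(3)] pos_prod[OF assms(4)] pos_prod[OF assms(5)] pos_prod[OF assms(6)] pos_prod[OF assms(7)])
  apply (intro conjI allI impI iffI; (elim conjE)?; (intro conjI)?; linarith)
  done

lemma tri_real:
  fixes a0 b0 c0 :: real
  assumes "a0 \<noteq> 0" "b0 \<noteq> 0" "c0 \<noteq> 0" "a0 + b0 \<noteq> 0" "b0 + c0 \<noteq> 0" "a0 + c0 \<noteq> 0" "a0 + b0 + c0 \<noteq> 0"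
  shows "\<exists>p1 q1 r1 p2 q2 r2 p3 q3 r3 :: real. (\<forall>a b c. (a * (a0) > 0 \<and> b * (b0) > 0 \<and> c * (c0) > 0 \<and> (a + b) * (a0 + b0) > 0 \<and> (b + c) * (b0 + c0) > 0 \<and> (a + c) * (a0 + c0) > 0 \<and> (a + b + c) * (a0 + b0 + c0) > 0) \<longleftrightarrow> (p1 * a + q1 * b + r1 * c > 0 \<and> p2 * a + q2 * b + r2 * c > 0 \<and> p3 * a + q3 * b + r3 * c > 0)) \<and> (\<forall>a b c. p1 * a + q1 * b + r1 * c = 0 \<and> p2 * a + q2 * b + r2 * c = 0 \<and> p3 * a + q3 * b + r3 * c = 0 \<longrightarrow> a = 0 \<and> b = 0 \<and> c = 0)"
proof -
  have s: "a0 < 0 \<or> 0 < a0" "b0 < 0 \<or> 0 < b0" "c0 < 0 \<or> 0 < c0" "a0 + b0 < 0 \<or> 0 < a0 + b0"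
    "b0 + c0 < 0 \<or> 0 < b0 + c0" "a0 + c0 < 0 \<or> 0 < a0 + c0" "a0 + b0 + c0 < 0 \<or> 0 < a0 + b0 + c0"
    using assms by (simp_all add: neq_iff)
  show ?thesis
    using s
    apply (elim disjE)
    apply ((rule tri_L0; assumption) | (rule tri_L1; assumption) | (rule tri_L2; assumption) | (rule tri_L3; assumption) | (rule tri_L4; assumption) | (rule tri_L5; assumption) | (rule tri_L6; assumption) | (rule tri_L7; assumption) | (rule tri_L8; assumption) | (rule tri_L9; assumption) | (rule tri_L10; assumption) | (rule tri_L11; assumption) | (rule tri_L12; assumption) | (rule tri_L13; assumption) | (rule tri_L14; assumption) | (rule tri_L15; assumption) | (rule tri_L16; assumption) | (rule tri_L17; assumption) | (rule tri_L18; assumption) | (rule tri_L19; assumption) | (rule tri_L20; assumption) | (rule tri_L21; assumption) | (rule tri_L22; assumption) | (rule tri_L23; assumption) | (rule tri_L24; assumption) | (rule tri_L25; assumption) | (rule tri_L26; assumption) | (rule tri_L27; assumption) | (rule tri_L28; assumption) | (rule tri_L29; assumption) | (rule tri_L30; assumption) | (rule tri_L31; assumption) | linarith)+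
    done
qed

lemma triangle_simplicial:
  fixes E :: "'n::finite \<Rightarrow> 'n \<Rightarrow> bool"
  assumes tri: "is_triangle E"
  shows "simplicial_arrangement (connected_subgraph_arrangement E)"
  unfolding simplicial_arrangement_def csa_eq
proof
  fix C assume "C \<in> components (UNIV - \<Union>{hyp J | J. J \<in> FG E})"
  then obtain x0 where x0: "\<forall>J\<in>FG E. fJ J x0 \<noteq> 0" and C: "C = cham (FG E) x0"
    using components_arr by blast
  have c3: "CARD('n) = 3" and Euv: "\<And>u v. E u v \<longleftrightarrow> u \<noteq> v" using tri by (auto simp: is_triangle_def)
  obtain u v w :: 'n where U: "UNIV = {u, v, w}" and d: "u \<noteq> v" "v \<noteq> w" "u \<noteq> w"
    using c3 card_3_iff[of "UNIV :: 'n set"] by blast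
  have FGe: "FG E = {J. J \<noteq> {}}"
  proof (rule set_eqI, rule iffI)
    fix J :: "'n set" assume "J \<in> {J. J \<noteq> {}}"
    then obtain z where z: "z \<in> J" by auto
    have "induced_connected E J"
      by (rule star_connected[of E z]) (use z Euv in auto)
    then show "J \<in> FG E" using z by (auto simp: FG_def)
  qed (auto simp: FG_def)
  have fJe: "fJ J x = (if u \<in> J then x $ u else 0) + (if v \<in> J then x $ v else 0) + (if w \<in> J then x $ w else 0)"
    for J x
  proof -
    have "fJ J x = (\<Sum>i\<in>UNIV. if i \<in> J then x $ i else 0)" unfolding fJ_def by (simp add: sum.If_cases)
    also have "\<dots> = (if u \<in> J then x $ u else 0) + (if v \<in> J then x $ v else 0) + (if w \<in> J then x $ w else 0)"
      unfolding U using d by simp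
    finally show ?thesis .
  qed
  have all3: "i = u \<or> i = v \<or> i = w" for i
  proof -
    have "i \<in> {u, v, w}" unfolding U[symmetric] by simp
    then show ?thesis by simp
  qed
  define a0 where "a0 = x0 $ u"
  define b0 where "b0 = x0 $ v"
  define c0 where "c0 = x0 $ w"
  have nz: "fJ J x0 \<noteq> 0" if "J \<noteq> {}" for J using x0 that FGe by auto
  have n1: "a0 \<noteq> 0" using nz[of "{u}"] d by (simp add: fJe a0_def)
  have n2: "b0 \<noteq> 0" using nz[of "{v}"] d by (simp add: fJe b0_def)
  have n3: "c0 \<noteq> 0" using nz[of "{w}"] d by (simp add: fJe c0_def)
  have n4: "a0 + b0 \<noteq> 0" using nz[of "{u, v}"] d by (simp add: fJe a0_def b0_def)
  have n5: "b0 + c0 \<noteq> 0" using nz[of "{v, w}"] d by (simp add: fJe b0_def c0_def)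
  have n6: "a0 + c0 \<noteq> 0" using nz[of "{u, w}"] d by (simp add: fJe a0_def c0_def)
  have n7: "a0 + b0 + c0 \<noteq> 0" using nz[of "{u, v, w}"] d by (simp add: fJe a0_def b0_def c0_def)
  obtain p1 q1 r1 p2 q2 r2 p3 q3 r3 :: real where
    eqv0: "\<forall>a b c. (a * a0 > 0 \<and> b * b0 > 0 \<and> c * c0 > 0 \<and> (a + b) * (a0 + b0) > 0 \<and>
         (b + c) * (b0 + c0) > 0 \<and> (a + c) * (a0 + c0) > 0 \<and> (a + b + c) * (a0 + b0 + c0) > 0)
       \<longleftrightarrow> (p1 * a + q1 * b + r1 * c > 0 \<and> p2 * a + q2 * b + r2 * c > 0 \<and> p3 * a + q3 * b + r3 * c > 0)"
    and ker0: "\<forall>a b c. p1 * a + q1 * b + r1 * c = 0 \<and> p2 * a + q2 * b + r2 * c = 0 \<and>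
         p3 * a + q3 * b + r3 * c = 0 \<longrightarrow> a = 0 \<and> b = 0 \<and> c = 0"
    using tri_real[OF n1 n2 n3 n4 n5 n6 n7] by (elim exE conjE) blast
  have eqv: "\<And>a b c. (a * a0 > 0 \<and> b * b0 > 0 \<and> c * c0 > 0 \<and> (a + b) * (a0 + b0) > 0 \<and>
         (b + c) * (b0 + c0) > 0 \<and> (a + c) * (a0 + c0) > 0 \<and> (a + b + c) * (a0 + b0 + c0) > 0)
       \<longleftrightarrow> (p1 * a + q1 * b + r1 * c > 0 \<and> p2 * a + q2 * b + r2 * c > 0 \<and> p3 * a + q3 * b + r3 * c > 0)"
    using eqv0 by blast
  have ker: "\<And>a b c. p1 * a + q1 * b + r1 * c = 0 \<Longrightarrow> p2 * a + q2 * b + r2 * c = 0 \<Longrightarrow>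
         p3 * a + q3 * b + r3 * c = 0 \<Longrightarrow> a = 0 \<and> b = 0 \<and> c = 0"
    using ker0 by blast
  define G :: "real^'n \<Rightarrow> real^'n" where
    "G x = (\<chi> i. if i = u then p1 * x $ u + q1 * x $ v + r1 * x $ w
                 else if i = v then p2 * x $ u + q2 * x $ v + r2 * x $ w
                 else p3 * x $ u + q3 * x $ v + r3 * x $ w)" for x
  have linG: "linear G"
  proof (rule linearI)
    fix x y :: "real^'n" and c :: real
    show "G (x + y) = G x + G y" unfolding G_def vec_eq_iff by (simp add: algebra_simps)
    show "G (c *\<^sub>R x) = c *\<^sub>R G x" unfolding G_def vec_eq_iff by (simp add: algebra_simps)
  qed
  have injG: "inj G" unfolding linear_injective_0[OF linG]
  proof (intro allI impI)
    fix x assume "G x = 0"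
    then have "G x $ u = 0" "G x $ v = 0" "G x $ w = 0" by auto
    then have e: "p1 * x $ u + q1 * x $ v + r1 * x $ w = 0" "p2 * x $ u + q2 * x $ v + r2 * x $ w = 0"
      "p3 * x $ u + q3 * x $ v + r3 * x $ w = 0" using d unfolding G_def by auto
    have z: "x $ u = 0" "x $ v = 0" "x $ w = 0" using ker[OF e] by auto
    show "x = 0" unfolding vec_eq_iff
    proof
      fix i show "x $ i = 0 $ i" using all3[of i] z by auto
    qed
  qed
  have cham_eq: "x \<in> cham (FG E) x0 \<longleftrightarrow>
     (x $ u * a0 > 0 \<and> x $ v * b0 > 0 \<and> x $ w * c0 > 0 \<and> (x $ u + x $ v) * (a0 + b0) > 0 \<and>
         (x $ v + x $ w) * (b0 + c0) > 0 \<and> (x $ u + x $ w) * (a0 + c0) > 0 \<and>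
         (x $ u + x $ v + x $ w) * (a0 + b0 + c0) > 0)" for x
  proof
    assume "x \<in> cham (FG E) x0"
    then have h: "fJ J x * fJ J x0 > 0" if "J \<noteq> {}" for J using that FGe by (auto simp: cham_def)
    show "x $ u * a0 > 0 \<and> x $ v * b0 > 0 \<and> x $ w * c0 > 0 \<and> (x $ u + x $ v) * (a0 + b0) > 0 \<and>
         (x $ v + x $ w) * (b0 + c0) > 0 \<and> (x $ u + x $ w) * (a0 + c0) > 0 \<and>
         (x $ u + x $ v + x $ w) * (a0 + b0 + c0) > 0"
      using h[of "{u}"] h[of "{v}"] h[of "{w}"] h[of "{u, v}"] h[of "{v, w}"] h[of "{u, w}"] h[of "{u, v, w}"] d
      by (simp add: fJe a0_def b0_def c0_def)
  next
    assume h: "x $ u * a0 > 0 \<and> x $ v * b0 > 0 \<and> x $ w * c0 > 0 \<and> (x $ u + x $ v) * (a0 + b0) > 0 \<and>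
         (x $ v + x $ w) * (b0 + c0) > 0 \<and> (x $ u + x $ w) * (a0 + c0) > 0 \<and>
         (x $ u + x $ v + x $ w) * (a0 + b0 + c0) > 0"
    show "x \<in> cham (FG E) x0" unfolding cham_def FGe
    proof (intro CollectI ballI)
      fix J :: "'n set" assume J: "J \<in> {J. J \<noteq> {}}"
      have "u \<in> J \<or> v \<in> J \<or> w \<in> J" using J U by auto
      then show "fJ J x * fJ J x0 > 0" unfolding fJe using h
        by (cases "u \<in> J"; cases "v \<in> J"; cases "w \<in> J") (simp_all add: a0_def b0_def c0_def algebra_simps)
    qed
  qed
  have "C = {x. \<forall>i. G x $ i > 0}"
  proof (rule set_eqI)
    fix x
    have "(\<forall>i. G x $ i > 0) \<longleftrightarrow> (G x $ u > 0 \<and> G x $ v > 0 \<and> G x $ w > 0)"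
    proof
      assume "\<forall>i. G x $ i > 0" then show "G x $ u > 0 \<and> G x $ v > 0 \<and> G x $ w > 0" by blast
    next
      assume h: "G x $ u > 0 \<and> G x $ v > 0 \<and> G x $ w > 0"
      show "\<forall>i. G x $ i > 0"
      proof
        fix i show "G x $ i > 0" using all3[of i] h by auto
      qed
    qed
    also have "\<dots> \<longleftrightarrow> x \<in> cham (FG E) x0" unfolding cham_eq eqv using d by (simp add: G_def)
    finally show "x \<in> C \<longleftrightarrow> x \<in> {x. \<forall>i. G x $ i > 0}" using C by simp
  qed
  then show "open_simplicial_cone C" by (rule simplicial_from_G[OF linG injG])
qed

locale pathg =
  fixes E :: "'n::finite \<Rightarrow> 'n \<Rightarrow> bool" and p :: "'n \<Rightarrow> nat"
  assumes bij: "bij_betw p UNIV {0..<CARD('n)}"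
    and Ep: "\<And>u v. E u v \<longleftrightarrow> (p u = p v + 1 \<or> p v = p u + 1)"
begin


definition P :: "nat \<Rightarrow> real^'n \<Rightarrow> real" where "P k x = fJ {i. p i < k} x"

definition q :: "nat \<Rightarrow> 'n" where "q = the_inv_into UNIV p"

lemma p_inj: "p u = p v \<Longrightarrow> u = v"
  using bij by (auto simp: bij_betw_def inj_on_def)

lemma p_lt: "p u < CARD('n)"
  using bij by (auto simp: bij_betw_def)

lemma q_p: "k < CARD('n) \<Longrightarrow> p (q k) = k"
  unfolding q_def using bij by (auto simp: bij_betw_def intro!: f_the_inv_into_f)

lemma p_q: "q (p u) = u"
  unfolding q_def using bij by (auto simp: bij_betw_def the_inv_into_f_f)

lemma symE: "E u v \<Longrightarrow> E v u" by (auto simp: Ep)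

lemma interval_conn:
  assumes "a < b" "b \<le> CARD('n)"
  shows "{i. a \<le> p i \<and> p i < b} \<in> FG E"
proof -
  define ys where "ys = map q [a..<b]"
  have "set ys = {i. a \<le> p i \<and> p i < b}"
  proof (rule set_eqI, rule iffI)
    fix x assume "x \<in> set ys"
    then obtain k where "a \<le> k" "k < b" "x = q k" by (auto simp: ys_def)
    then show "x \<in> {i. a \<le> p i \<and> p i < b}" using q_p assms by auto
  next
    fix x assume "x \<in> {i. a \<le> p i \<and> p i < b}"
    then have "x = q (p x)" "a \<le> p x" "p x < b" by (auto simp: p_q)
    then show "x \<in> set ys" unfolding ys_def by (metis atLeastLessThan_iff image_eqI set_map set_upt)
  qed
  moreover have "successively E ys"
    unfolding successively_conv_nth
  proof (intro allI impI)
    fix j assume j: "Suc j < length ys"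
    then have "a + Suc j < b" by (simp add: ys_def)
    then have "p (q (a + j)) = a + j" "p (q (a + Suc j)) = a + Suc j" using q_p assms by auto
    then have "E (q (a + j)) (q (a + Suc j))" by (simp add: Ep)
    then show "E (ys ! j) (ys ! Suc j)" using j by (simp add: ys_def)
  qed
  moreover have "ys \<noteq> []" using assms by (simp add: ys_def)
  ultimately have "induced_connected E {i. a \<le> p i \<and> p i < b}"
    using chain_connected[of E, OF symE] by metis
  moreover have "{i. a \<le> p i \<and> p i < b} \<noteq> {}"
  proof -
    have "set ys \<noteq> {}" using \<open>ys \<noteq> []\<close> by simp
    then show ?thesis using \<open>set ys = _\<close> by simp
  qed
  ultimately show ?thesis by (simp add: FG_def)
qed

lemma walk_between:
  assumes "(\<lambda>a b. a \<in> J \<and> b \<in> J \<and> E a b)\<^sup>*\<^sup>* x y" "x \<in> J"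
  shows "\<forall>m. (p x \<le> m \<and> m \<le> p y) \<or> (p y \<le> m \<and> m \<le> p x) \<longrightarrow> (\<exists>z\<in>J. p z = m)"
  using assms
proof (induction rule: rtranclp_induct)
  case base then show ?case by auto
next
  case (step y z)
  then have zJ: "z \<in> J" and e: "p z = p y + 1 \<or> p y = p z + 1" by (auto simp: Ep)
  show ?case
  proof (intro allI impI)
    fix m assume m: "(p x \<le> m \<and> m \<le> p z) \<or> (p z \<le> m \<and> m \<le> p x)"
    show "\<exists>z\<in>J. p z = m"
    proof (cases "m = p z")
      case True then show ?thesis using zJ by blast
    next
      case False
      then have "(p x \<le> m \<and> m \<le> p y) \<or> (p y \<le> m \<and> m \<le> p x)" using m e by auto
      then show ?thesis using step.IH step.prems by blast
    qed
  qed
qed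

lemma conn_interval:
  assumes J: "J \<in> FG E"
  shows "\<exists>a b. a < b \<and> b \<le> CARD('n) \<and> J = {i. a \<le> p i \<and> p i < b}"
proof -
  have ne: "J \<noteq> {}" and ic: "induced_connected E J" using J by (auto simp: FG_def)
  define a where "a = Min (p ` J)"
  define c where "c = Max (p ` J)"
  have fin: "finite (p ` J)" by simp
  have aJ: "a \<in> p ` J" unfolding a_def using fin ne by (intro Min_in) auto
  have cJ: "c \<in> p ` J" unfolding c_def using fin ne by (intro Max_in) auto
  obtain j1 where j1: "j1 \<in> J" "p j1 = a" using aJ by auto
  obtain j2 where j2: "j2 \<in> J" "p j2 = c" using cJ by auto
  have le: "a \<le> p i" "p i \<le> c" if "i \<in> J" for i using that fin by (auto simp: a_def c_def)
  have "(\<lambda>a b. a \<in> J \<and> b \<in> J \<and> E a b)\<^sup>*\<^sup>* j1 j2" using ic j1 j2 unfolding induced_connected_def by blast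
  from walk_between[OF this j1(1)] have btw: "\<And>m. a \<le> m \<Longrightarrow> m \<le> c \<Longrightarrow> \<exists>z\<in>J. p z = m"
    using j1 j2 by auto
  have "J = {i. a \<le> p i \<and> p i < c + 1}"
  proof (rule set_eqI, rule iffI)
    fix i assume iJ: "i \<in> J" then show "i \<in> {i. a \<le> p i \<and> p i < c + 1}" using le[OF iJ] by auto
  next
    fix i assume "i \<in> {i. a \<le> p i \<and> p i < c + 1}"
    then obtain z where "z \<in> J" "p z = p i" using btw[of "p i"] by auto
    then show "i \<in> J" using p_inj by metis
  qed
  moreover have "a < c + 1" using le[OF j1(1)] le[OF j1(1)] j1 j2 le[OF j2(1)] by simp
  moreover have "c + 1 \<le> CARD('n)" using p_lt j2 by (metis Suc_eq_plus1 Suc_leI)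
  ultimately show ?thesis by blast
qed

lemma fJ_interval:
  assumes "a \<le> b"
  shows "fJ {i. a \<le> p i \<and> p i < b} x = P b x - P a x"
proof -
  have "{i. p i < b} = {i. p i < a} \<union> {i. a \<le> p i \<and> p i < b}" using assms by auto
  moreover have "{i. p i < a} \<inter> {i. a \<le> p i \<and> p i < b} = {}" by auto
  ultimately have "fJ {i. p i < b} x = fJ {i. p i < a} x + fJ {i. a \<le> p i \<and> p i < b} x"
    unfolding fJ_def by (simp add: sum.union_disjoint)
  then show ?thesis by (simp add: P_def)
qed

lemma P0: "P 0 x = 0" by (simp add: P_def fJ_def)

lemma P_succ:
  assumes "k < CARD('n)"
  shows "P (Suc k) x - P k x = x $ q k"
proof -
  have "{i. k \<le> p i \<and> p i < Suc k} = {q k}"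
    using q_p[OF assms] p_q by (auto simp: le_less_Suc_eq)
  then show ?thesis using fJ_interval[of k "Suc k" x] by (simp add: fJ_def)
qed

end

context pathg
begin

lemma P_linear: "P k (x + y) = P k x + P k y" "P k (c *\<^sub>R x) = c * P k x"
  by (simp_all add: P_def fJ_add fJ_scale)

lemma chamber_simplicial:
  assumes x0: "\<forall>J\<in>FG E. fJ J x0 \<noteq> 0"
  shows "open_simplicial_cone (cham (FG E) x0)"
proof -
  let ?n = "CARD('n)"
  define f where "f k = P k x0" for k
  have fJP: "fJ {i. a \<le> p i \<and> p i < b} x = P b x - P a x" if "a \<le> b" for a b x
    using fJ_interval[OF that] .
  have dist: "f k \<noteq> f k'" if "k \<le> ?n" "k' \<le> ?n" "k' < k" for k k'
  proof -
    have "{i. k' \<le> p i \<and> p i < k} \<in> FG E" using interval_conn that by simp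
    then have "fJ {i. k' \<le> p i \<and> p i < k} x0 \<noteq> 0" using x0 by blast
    then show ?thesis using fJP[of k' k x0] that by (simp add: f_def)
  qed
  have injf: "inj_on f {0..?n}"
  proof (rule inj_onI)
    fix k k' assume "k \<in> {0..?n}" "k' \<in> {0..?n}" "f k = f k'"
    then show "k = k'" using dist[of k k'] dist[of k' k] by (metis atLeastAtMost_iff linorder_neqE_nat)
  qed
  define V where "V = f ` {0..?n}"
  define L where "L = sorted_list_of_set V"
  have cardV: "card V = Suc ?n" unfolding V_def using card_image[OF injf] by simp
  have lenL: "length L = Suc ?n" unfolding L_def using cardV by simp
  have setL: "set L = V" unfolding L_def V_def by simp
  have strict: "sorted_wrt (<) L" unfolding L_def by (simp add: strict_sorted_iff)
  have Lmono: "L ! s < L ! t" if "s < t" "t \<le> ?n" for s t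
    using sorted_wrt_nth_less[OF strict that(1)] that lenL by simp
  define \<sigma> where "\<sigma> t = the_inv_into {0..?n} f (L ! t)" for t
  have S1: "\<sigma> t \<le> ?n \<and> f (\<sigma> t) = L ! t" if "t \<le> ?n" for t
  proof -
    have "L ! t \<in> f ` {0..?n}" using that lenL setL V_def by (metis less_Suc_eq_le nth_mem)
    then obtain k where k: "k \<in> {0..?n}" "L ! t = f k" by auto
    then have "\<sigma> t = k" unfolding \<sigma>_def using injf by (simp add: the_inv_into_f_f)
    then show ?thesis using k by auto
  qed
  have S2: "\<exists>t \<le> ?n. \<sigma> t = k" if "k \<le> ?n" for k
  proof -
    have "f k \<in> set L" using that setL V_def by auto
    then obtain t where t: "t < length L" "L ! t = f k" by (auto simp: in_set_conv_nth)
    have "\<sigma> t = k" unfolding \<sigma>_def t(2) using injf that by (simp add: the_inv_into_f_f)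
    moreover have "t \<le> ?n" using t lenL by simp
    ultimately show ?thesis by blast
  qed
  define G :: "real^'n \<Rightarrow> real^'n" where
    "G x = (\<chi> i. P (\<sigma> (Suc (p i))) x - P (\<sigma> (p i)) x)" for x
  have linG: "linear G"
  proof (rule linearI)
    fix x y :: "real^'n" and c :: real
    show "G (x + y) = G x + G y" unfolding G_def vec_eq_iff by (simp add: P_linear)
    show "G (c *\<^sub>R x) = c *\<^sub>R G x" unfolding G_def vec_eq_iff by (simp add: P_linear algebra_simps)
  qed
  have chamP: "(P b x - P a x) * (f b - f a) > 0" if x: "x \<in> cham (FG E) x0" "a < b" "b \<le> ?n" for x a b
  proof -
    have "{i. a \<le> p i \<and> p i < b} \<in> FG E" using interval_conn that by simp
    then have "fJ {i. a \<le> p i \<and> p i < b} x * fJ {i. a \<le> p i \<and> p i < b} x0 > 0"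
      using x(1) by (auto simp: cham_def)
    then show ?thesis using fJP[of a b] that by (simp add: f_def)
  qed
  have Ceq: "cham (FG E) x0 = {x. \<forall>i. G x $ i > 0}"
  proof (rule set_eqI, rule iffI)
    fix x assume x: "x \<in> cham (FG E) x0"
    show "x \<in> {x. \<forall>i. G x $ i > 0}"
    proof (intro CollectI allI)
      fix i
      define t where "t = p i"
      have t: "Suc t \<le> ?n" using p_lt by (simp add: t_def Suc_leI)
      have s1: "\<sigma> t \<le> ?n" "f (\<sigma> t) = L ! t" using S1[of t] t by auto
      have s2: "\<sigma> (Suc t) \<le> ?n" "f (\<sigma> (Suc t)) = L ! Suc t" using S1[of "Suc t"] t by auto
      have lt: "f (\<sigma> t) < f (\<sigma> (Suc t))" using s1 s2 Lmono[of t "Suc t"] t by simp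
      then have ne: "\<sigma> t \<noteq> \<sigma> (Suc t)" by auto
      have "(P (\<sigma> (Suc t)) x - P (\<sigma> t) x) > 0"
      proof (cases "\<sigma> t < \<sigma> (Suc t)")
        case True
        have "(P (\<sigma> (Suc t)) x - P (\<sigma> t) x) * (f (\<sigma> (Suc t)) - f (\<sigma> t)) > 0"
          using chamP[OF x True s2(1)] .
        then show ?thesis using lt by (simp add: zero_less_mult_iff)
      next
        case False
        then have lt2: "\<sigma> (Suc t) < \<sigma> t" using ne by simp
        have "(P (\<sigma> t) x - P (\<sigma> (Suc t)) x) * (f (\<sigma> t) - f (\<sigma> (Suc t))) > 0"
          using chamP[OF x lt2 s1(1)] .
        then show ?thesis using lt by (simp add: zero_less_mult_iff)
      qed
      then show "G x $ i > 0" by (simp add: G_def t_def)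
    qed
  next
    fix x assume "x \<in> {x. \<forall>i. G x $ i > 0}"
    then have g: "\<And>i. G x $ i > 0" by simp
    have step: "P (\<sigma> t) x < P (\<sigma> (Suc t)) x" if "t < ?n" for t
    proof -
      have "p (q t) = t" using q_p that by simp
      then show ?thesis using g[of "q t"] by (simp add: G_def)
    qed
    have mono: "P (\<sigma> s) x < P (\<sigma> t) x" if "s < t" "t \<le> ?n" for s t
      using that
    proof (induction t)
      case 0 then show ?case by simp
    next
      case (Suc t)
      show ?case
      proof (cases "s = t")
        case True then show ?thesis using step[of t] Suc.prems by simp
      next
        case False
        then have "P (\<sigma> s) x < P (\<sigma> t) x" using Suc by simp
        then show ?thesis using step[of t] Suc.prems by simp
      qed
    qed
    show "x \<in> cham (FG E) x0" unfolding cham_def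
    proof (intro CollectI ballI)
      fix J assume J: "J \<in> FG E"
      obtain a b where ab: "a < b" "b \<le> ?n" "J = {i. a \<le> p i \<and> p i < b}" using conn_interval[OF J] by blast
      obtain s where s: "s \<le> ?n" "\<sigma> s = a" using S2[of a] ab by auto
      obtain t where t: "t \<le> ?n" "\<sigma> t = b" using S2[of b] ab by auto
      have e: "fJ J x = P b x - P a x" "fJ J x0 = f b - f a" using fJP[of a b] ab by (auto simp: f_def)
      have fs: "f a = L ! s" "f b = L ! t" using S1 s t by auto
      have "s \<noteq> t" using s t ab by auto
      then show "fJ J x * fJ J x0 > 0"
      proof (cases "s < t")
        case True
        have "P a x < P b x" using mono[OF True t(1)] s t by simp
        moreover have "f a < f b" using Lmono[OF True t(1)] fs by simp
        ultimately show ?thesis unfolding e by simp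
      next
        case False
        then have ts: "t < s" using \<open>s \<noteq> t\<close> by simp
        have "P b x < P a x" using mono[OF ts s(1)] s t by simp
        moreover have "f b < f a" using Lmono[OF ts s(1)] fs by simp
        ultimately show ?thesis unfolding e by (simp add: mult_neg_neg)
      qed
    qed
  qed
  have injG: "inj G" unfolding linear_injective_0[OF linG]
  proof (intro allI impI)
    fix x assume G0: "G x = 0"
    have step: "P (\<sigma> (Suc t)) x = P (\<sigma> t) x" if "t < ?n" for t
    proof -
      have "p (q t) = t" using q_p that by simp
      then show ?thesis using arg_cong[OF G0, of "\<lambda>v. v $ q t"] by (simp add: G_def)
    qed
    have const: "P (\<sigma> t) x = P (\<sigma> 0) x" if "t \<le> ?n" for t
      using that
    proof (induction t)
      case 0 then show ?case by simp
    next
      case (Suc t) then show ?case using step[of t] by simp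
    qed
    have allk: "P k x = 0" if kn: "k \<le> ?n" for k
    proof -
      obtain t where "t \<le> ?n" "\<sigma> t = k" using S2[OF kn] by blast
      moreover obtain t0 where "t0 \<le> ?n" "\<sigma> t0 = 0" using S2[of 0] by auto
      ultimately show ?thesis using const P0 by metis
    qed
    show "x = 0" unfolding vec_eq_iff
    proof
      fix i
      have "x $ q (p i) = P (Suc (p i)) x - P (p i) x" using P_succ[of "p i" x] p_lt by simp
      also have "\<dots> = 0" using allk[of "Suc (p i)"] allk[of "p i"] p_lt[of i] by (simp add: Suc_leI)
      finally show "x $ i = 0 $ i" by (simp add: p_q)
    qed
  qed
  show ?thesis by (rule simplicial_from_G[OF linG injG Ceq])
qed

end

lemma path_simplicial:
  fixes E :: "'n::finite \<Rightarrow> 'n \<Rightarrow> bool"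
  assumes "is_path_graph E"
  shows "simplicial_arrangement (connected_subgraph_arrangement E)"
proof -
  obtain p :: "'n \<Rightarrow> nat" where "bij_betw p UNIV {0..<CARD('n)}"
    "\<forall>u v. E u v \<longleftrightarrow> (p u = p v + 1 \<or> p v = p u + 1)"
    using assms unfolding is_path_graph_def by blast
  then interpret pathg E p by unfold_locales auto
  show ?thesis unfolding simplicial_arrangement_def csa_eq
  proof
    fix C assume "C \<in> components (UNIV - \<Union>{hyp J | J. J \<in> FG E})"
    then obtain x0 where x0: "\<forall>J\<in>FG E. fJ J x0 \<noteq> 0" and C: "C = cham (FG E) x0"
      using components_arr by blast
    show "open_simplicial_cone C" unfolding C by (rule chamber_simplicial[OF x0])
  qed
qed

theorem theorem7p2:
  fixes E :: "'n::finite \<Rightarrow> 'n \<Rightarrow> bool"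
  assumes "simple_graph E" and "graph_connected E"
  shows "simplicial_arrangement (connected_subgraph_arrangement E) \<longleftrightarrow>
           is_triangle E \<or> is_path_graph E"
proof
  assume S: "simplicial_arrangement (connected_subgraph_arrangement E)"
  show "is_triangle E \<or> is_path_graph E"
  proof (rule ccontr)
    assume nt: "\<not> (is_triangle E \<or> is_path_graph E)"
    have irr: "\<And>x. \<not> E x x" using assms(1) by (auto simp: simple_graph_def)
    show False
    proof (cases "\<exists>v a b c. v \<noteq> a \<and> v \<noteq> b \<and> v \<noteq> c \<and> a \<noteq> b \<and> a \<noteq> c \<and> b \<noteq> c \<and> E v a \<and> E v b \<and> E v c")
      case True
      then obtain v a b c where "v \<noteq> a" "v \<noteq> b" "v \<noteq> c" "a \<noteq> b" "a \<noteq> c" "b \<noteq> c" "E v a" "E v b" "E v c"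
        by blast
      from certA[OF assms(1) this] S show False by simp
    next
      case False
      have deg: "x = y \<or> x = z \<or> y = z" if "E v x" "E v y" "E v z" for v x y z
      proof (rule ccontr)
        assume "\<not> (x = y \<or> x = z \<or> y = z)"
        moreover have "v \<noteq> x" "v \<noteq> y" "v \<noteq> z" using that irr by auto
        ultimately show False using False that by blast
      qed
      have cls: "is_triangle E \<or> is_path_graph E \<or>
        (\<exists>u w r0. u \<noteq> w \<and> r0 \<noteq> u \<and> r0 \<noteq> w \<and> induced_connected E (UNIV - {u}) \<and>
           induced_connected E (UNIV - {w}) \<and> \<not> induced_connected E (UNIV - {u, w}))"
        by (rule graph_classify[OF assms(1) assms(2)]) (rule deg)
      from cls nt obtain u w r0 where
        "u \<noteq> w" "r0 \<noteq> u" "r0 \<noteq> w" "induced_connected E (UNIV - {u})"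
        "induced_connected E (UNIV - {w})" "\<not> induced_connected E (UNIV - {u, w})"
        by blast
      from certB[OF this] S show False by simp
    qed
  qed
next
  assume "is_triangle E \<or> is_path_graph E"
  then show "simplicial_arrangement (connected_subgraph_arrangement E)"
    using triangle_simplicial path_simplicial by blast
qed

end
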